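(* Let $M\ge1$, $\mathbf a\in\mathcal A_M$ and $\mathbf b\in\mathcal A_1$. Then \[ \Phi_{\mathbf a\circ\mathbf b}=\Phi_{\mathbf b}\circ\Phi_{\mathbf a}|_{X_{\mathbf a\circ\mathbf b}},\qquad \hat\Phi_{\mathbf a\circ\mathbf b}=\hat\Phi_{\mathbf b}\circ\hat\Phi_{\mathbf a}|_{\alpha^{-1}(X_{\mathbf a\circ\mathbf b})}, \] and consequently \[ \Phi_{\mathbf a\circ\mathbf b}^{-1}=\Phi_{\mathbf a}^{-1}\circ\Phi_{\mathbf b}^{-1},\qquad \hat\Phi_{\mathbf a\circ\mathbf b}^{-1}=\hat\Phi_{\mathbf a}^{-1}\circ\hat\Phi_{\mathbf b}^{-1}. \]
   Context: Sequences. $\Omega_M=\{0,\dots,M\}^{\mathbb N}$, ordered lexicographically; words are compared via $\mathbf c\prec\mathbf d$ iff $\mathbf c0^\infty\prec\mathbf d0^\infty$. Word operations. For a word $c_1\dots c_k$: - if $c_k<M$, then $c_1\dots c_k^+=c_1\dots c_{k-1}(c_k+1)$; - the reflection is $\overline{c_1\dots c_k}=(M-c_1)\dots(M-c_k)$, and likewise $\overline{(c_i)}=(M-c_i)$ for sequences. Quasi-greedy expansion. For $q\in(1,M+1]$, $\alpha(q)$ is the lexicographically largest sequence $(a_i)\in\Omega_M$ not ending in $0^\infty$ with $\sum a_iq^{-i}=1$. $\alpha^*$ denotes this map for $M=1$. The set $\mathcal V$. Let $\mathbf V=\{(c_i)\in\Omega_M:\overline{(c_i)}\preceq\sigma^n((c_i))\preceq(c_i)\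 \forall n\ge0\}$ and $\mathcal V=\{q\in(1,M+1]:\alpha(q)\in\mathbf V\}$. $\mathcal V^*$ denotes $\mathcal V$ for $M=1$. Fundamental words. A word $a_1\dots a_m$ ($m\ge2$) is fundamental if $\overline{a_1\dots a_{m-i}}\preceq a_{i+1}\dots a_m\prec a_1\dots a_{m-i}$ for $1\le i<m$. When $M\ge2$, a letter $a_1$ is fundamental if $M-a_1\le a_1<M$. $\mathcal A_M$ is the set of fundamental words, and $\mathcal A_1$ is this set for $M=1$; all its words begin with $1$. For $\mathbf a\in\mathcal A_M$, $q_L(\mathbf a),q_R(\mathbf a)$ are defined by $\alpha(q_L(\mathbf a))=\mathbf a^\infty$ and $\alpha(q_R(\mathbf a))=\mathbf a^+(\overline{\mathbf a})^\infty$. The graph. For $\mathbf a\in\mathcal A_M$, let $G$ have vertices Start, $A$, $B$ and edges - $e_0$: Start$\to A$, - $e_1$: $A\to B$, - $e_2$: $B\to B$, - $e_3$: $B\to A$, - $e_4$: $A\to A$. It carries two labelings: - $\mathcal L_{\mathbf a}$: $e_0,e_3\mapsto\mathbf a^+$; $e_1\mapsto\overline{\mathbf a^+}$; $e_2\mapsto\mathbf a$; $e_4\mapsto\overline{\mathbf a}$; - $\mathcal L^*$: $e_0,e_3,e_4\mapsto1$; $e_1,e_2\mapsto0$. $X_{\mathbf a}$ is the set of concatenations of $\mathcal L_{\mathbf a}$-labels along infinite paths starting with $e_0$. Let $X^*=\{x\in\{0,1\}^{\mathbb N}:x_1=1\}$. The maps $\Phi_{\mathbf a}$ and $\hat\Phi_{\mathbf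 a}$. - $\Phi_{\mathbf a}:X_{\mathbf a}\to X^*$ replaces each $\mathcal L_{\mathbf a}$-label on the (unique) path by its $\mathcal L^*$-label. It is a strictly increasing bijection. - The same rule defines $\Phi_{\mathbf a}$ on finite block words along paths starting with $e_0$ or with $e_1$. When $\mathbf a\ne\overline{\mathbf a}$, it also applies along paths starting with $e_2$ or $e_4$. - For $q\in(q_L(\mathbf a),q_R(\mathbf a)]\cap\mathcal V$ one has $\alpha(q)\in X_{\mathbf a}$. Define $\hat\Phi_{\mathbf a}(q):=(\alpha^* )^{-1}(\Phi_{\mathbf a}(\alpha(q)))\in\mathcal V^*$. Composition. For $\mathbf b\in\mathcal A_1$, $\mathbf a\circ\mathbf b:=\Phi_{\mathbf a}^{-1}(\mathbf b)$, the unique block word along a path from Start whose image under $\Phi_{\mathbf a}$ is $\mathbf b$. It belongs to $\mathcal A_M$. *)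

theory Defs
  imports Complex_Main
begin

text \<open>Sequences in Omega_M are functions nat => nat, index 0 standing for the paper's index 1.
Words are nat lists.\<close>

definition Omega :: "nat \<Rightarrow> (nat \<Rightarrow> nat) set" where
  "Omega M = {x. \<forall>i. x i \<le> M}"

definition lex_less :: "(nat \<Rightarrow> nat) \<Rightarrow> (nat \<Rightarrow> nat) \<Rightarrow> bool" where
  "lex_less x y \<longleftrightarrow> (\<exists>n. (\<forall>i<n. x i = y i) \<and> x n < y n)"

definition lex_le :: "(nat \<Rightarrow> nat) \<Rightarrow> (nat \<Rightarrow> nat) \<Rightarrow> bool" where
  "lex_le x y \<longleftrightarrow> x = y \<or> lex_less x y"

definition pad0 :: "nat list \<Rightarrow> nat \<Rightarrow> nat" where
  "pad0 w = (\<lambda>i. if i < length w then w ! i else 0)"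

definition wless :: "nat list \<Rightarrow> nat list \<Rightarrow> bool" where
  "wless c d \<longleftrightarrow> lex_less (pad0 c) (pad0 d)"

definition wle :: "nat list \<Rightarrow> nat list \<Rightarrow> bool" where
  "wle c d \<longleftrightarrow> lex_le (pad0 c) (pad0 d)"

definition wplus :: "nat list \<Rightarrow> nat list" where
  "wplus w = butlast w @ [last w + 1]"

definition wrefl :: "nat \<Rightarrow> nat list \<Rightarrow> nat list" where
  "wrefl M w = map (\<lambda>c. M - c) w"

definition srefl :: "nat \<Rightarrow> (nat \<Rightarrow> nat) \<Rightarrow> (nat \<Rightarrow> nat)" where
  "srefl M x = (\<lambda>i. M - x i)"

definition shift :: "nat \<Rightarrow> (nat \<Rightarrow> nat) \<Rightarrow> (nat \<Rightarrow> nat)" where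
  "shift n x = (\<lambda>i. x (i + n))"

definition per :: "nat list \<Rightarrow> nat \<Rightarrow> nat" where
  "per w = (\<lambda>i. w ! (i mod length w))"

definition pre_per :: "nat list \<Rightarrow> nat list \<Rightarrow> nat \<Rightarrow> nat" where
  "pre_per u w = (\<lambda>i. if i < length u then u ! i else per w (i - length u))"

definition qg_cands :: "nat \<Rightarrow> real \<Rightarrow> (nat \<Rightarrow> nat) set" where
  "qg_cands M q = {a. a \<in> Omega M \<and> (\<forall>N. \<exists>n\<ge>N. a n \<noteq> 0)
                       \<and> (\<lambda>i. real (a i) / q ^ Suc i) sums 1}"

definition alpha :: "nat \<Rightarrow> real \<Rightarrow> nat \<Rightarrow> nat" where
  "alpha M q = (THE a. a \<in> qg_cands M q \<and> (\<forall>b \<in> qg_cands M q. lex_le b a))"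

definition Vseq :: "nat \<Rightarrow> (nat \<Rightarrow> nat) set" where
  "Vseq M = {c \<in> Omega M. \<forall>n. lex_le (srefl M c) (shift n c) \<and> lex_le (shift n c) c}"

definition Vset :: "nat \<Rightarrow> real set" where
  "Vset M = {q. 1 < q \<and> q \<le> real M + 1 \<and> alpha M q \<in> Vseq M}"

definition Fund :: "nat \<Rightarrow> nat list set" where
  "Fund M = {a. set a \<subseteq> {0..M} \<and>
     ((length a \<ge> 2 \<and> (\<forall>i. 1 \<le> i \<and> i < length a \<longrightarrow>
          wle (wrefl M (take (length a - i) a)) (drop i a)
        \<and> wless (drop i a) (take (length a - i) a)))
      \<or> (M \<ge> 2 \<and> length a = 1 \<and> M - hd a \<le> hd a \<and> hd a < M))}"

definition qL :: "nat \<Rightarrow> nat list \<Rightarrow> real" where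
  "qL M a = (THE q. 1 < q \<and> q \<le> real M + 1 \<and> alpha M q = per a)"

definition qR :: "nat \<Rightarrow> nat list \<Rightarrow> real" where
  "qR M a = (THE q. 1 < q \<and> q \<le> real M + 1 \<and> alpha M q = pre_per (wplus a) (wrefl M a))"

datatype vtx = Start | VA | VB
datatype edge = E0 | E1 | E2 | E3 | E4

fun src :: "edge \<Rightarrow> vtx" where
  "src E0 = Start" | "src E1 = VA" | "src E2 = VB" | "src E3 = VB" | "src E4 = VA"

fun tgt :: "edge \<Rightarrow> vtx" where
  "tgt E0 = VA" | "tgt E1 = VB" | "tgt E2 = VB" | "tgt E3 = VA" | "tgt E4 = VA"

fun lab :: "nat \<Rightarrow> nat list \<Rightarrow> edge \<Rightarrow> nat list" where
  "lab M a E0 = wplus a"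
| "lab M a E3 = wplus a"
| "lab M a E1 = wrefl M (wplus a)"
| "lab M a E2 = a"
| "lab M a E4 = wrefl M a"

fun labstar :: "edge \<Rightarrow> nat list" where
  "labstar E0 = [1]" | "labstar E3 = [1]" | "labstar E4 = [1]"
| "labstar E1 = [0]" | "labstar E2 = [0]"

definition ipath :: "(nat \<Rightarrow> edge) \<Rightarrow> bool" where
  "ipath p \<longleftrightarrow> p 0 = E0 \<and> (\<forall>n. tgt (p n) = src (p (Suc n)))"

definition fpath :: "edge list \<Rightarrow> bool" where
  "fpath p \<longleftrightarrow> p \<noteq> [] \<and> hd p = E0 \<and> (\<forall>n. Suc n < length p \<longrightarrow> tgt (p ! n) = src (p ! Suc n))"

text \<open>concatenation of an infinite sequence of nonempty words\<close>
definition concat_inf :: "(nat \<Rightarrow> nat list) \<Rightarrow> nat \<Rightarrow> nat" where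
  "concat_inf w = (\<lambda>n. concat (map w [0..<Suc n]) ! n)"

definition X :: "nat \<Rightarrow> nat list \<Rightarrow> (nat \<Rightarrow> nat) set" where
  "X M a = {concat_inf (lab M a \<circ> p) | p. ipath p}"

definition Xstar :: "(nat \<Rightarrow> nat) set" where
  "Xstar = {x. x \<in> Omega 1 \<and> x 0 = 1}"

definition Phi :: "nat \<Rightarrow> nat list \<Rightarrow> (nat \<Rightarrow> nat) \<Rightarrow> (nat \<Rightarrow> nat)" where
  "Phi M a x = (THE y. \<exists>p. ipath p \<and> x = concat_inf (lab M a \<circ> p) \<and> y = concat_inf (labstar \<circ> p))"

definition Dom :: "nat \<Rightarrow> nat list \<Rightarrow> real set" where
  "Dom M a = {q. qL M a < q \<and> q \<le> qR M a} \<inter> Vset M"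

definition Phihat :: "nat \<Rightarrow> nat list \<Rightarrow> real \<Rightarrow> real" where
  "Phihat M a q = (THE p. 1 < p \<and> p \<le> 2 \<and> alpha 1 p = Phi M a (alpha M q))"

text \<open>a o b = Phi_a^{-1}(b) on finite block words along a path from Start\<close>
definition comp :: "nat \<Rightarrow> nat list \<Rightarrow> nat list \<Rightarrow> nat list" where
  "comp M a b = (THE w. \<exists>p. fpath p \<and> w = concat (map (lab M a) p) \<and> b = concat (map labstar p))"

end

theory Submission
  imports Defs
begin

lemma lex_less_irrefl[simp]: "\<not> lex_less x x"
  by (auto simp: lex_less_def)

lemma lex_less_trans: "lex_less x y \<Longrightarrow> lex_less y z \<Longrightarrow> lex_less x z"
  unfolding lex_less_def
proof (elim exE conjE)
  fix n1 n2 assume a1: "\<forall>i<n1. x i = y i" "x n1 < y n1" and a2: "\<forall>i<n2. y i = z i" "y n2 < z n2"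
  show "\<exists>n. (\<forall>i<n. x i = z i) \<and> x n < z n"
  proof (cases "n1 < n2")
    case True then show ?thesis using a1 a2 by (intro exI[of _ n1]) auto
  next
    case False then show ?thesis using a1 a2
      by (intro exI[of _ n2]) (auto simp: not_less order_le_less)
  qed
qed

lemma lex_tri: "x = y \<or> lex_less x y \<or> lex_less y x"
proof (cases "x = y")
  case False
  then obtain k where "x k \<noteq> y k" by auto
  define n where "n = (LEAST n. x n \<noteq> y n)"
  have n1: "x n \<noteq> y n" unfolding n_def by (rule LeastI[of _ k]) fact
  have n2: "\<forall>i<n. x i = y i" unfolding n_def using not_less_Least by blast
  show ?thesis using n1 n2 unfolding lex_less_def
    by (cases "x n < y n") (auto intro!: exI[of _ n] simp: not_less order_le_less)
qed simp

lemma lex_less_asym: "lex_less x y \<Longrightarrow> \<not> lex_less y x"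
  using lex_less_trans lex_less_irrefl by blast

lemma lex_le_refl[simp]: "lex_le x x" by (simp add: lex_le_def)

lemma lex_le_trans: "lex_le x y \<Longrightarrow> lex_le y z \<Longrightarrow> lex_le x z"
  unfolding lex_le_def using lex_less_trans by blast

lemma lex_le_less_trans: "lex_le x y \<Longrightarrow> lex_less y z \<Longrightarrow> lex_less x z"
  unfolding lex_le_def using lex_less_trans by blast

lemma lex_less_le_trans: "lex_less x y \<Longrightarrow> lex_le y z \<Longrightarrow> lex_less x z"
  unfolding lex_le_def using lex_less_trans by blast

lemma lex_le_antisym: "lex_le x y \<Longrightarrow> lex_le y x \<Longrightarrow> x = y"
  unfolding lex_le_def using lex_less_asym by blast

lemma lex_not_less: "\<not> lex_less x y \<longleftrightarrow> lex_le y x"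
  unfolding lex_le_def using lex_tri lex_less_asym lex_less_irrefl by metis

lemma lex_not_le: "\<not> lex_le x y \<longleftrightarrow> lex_less y x"
  using lex_not_less by metis

lemma lex_less_imp_le: "lex_less x y \<Longrightarrow> lex_le x y"
  by (simp add: lex_le_def)


definition val :: "real \<Rightarrow> (nat \<Rightarrow> nat) \<Rightarrow> real" where
  "val q d = (\<Sum>i. real (d i) / q ^ Suc i)"

definition infnz :: "(nat \<Rightarrow> nat) \<Rightarrow> bool" where
  "infnz d \<longleftrightarrow> (\<forall>N. \<exists>n\<ge>N. d n \<noteq> 0)"

lemma summable_val:
  assumes "d \<in> Omega M" "1 < q"
  shows "summable (\<lambda>i. real (d i) / q ^ Suc i)"
proof (rule summable_comparison_test')
  show "summable (\<lambda>i. (real M / q) * (1/q)^i)"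
    using assms by (intro summable_mult summable_geometric) auto
  fix n
  have "d n \<le> M" using assms by (auto simp: Omega_def)
  then show "norm (real (d n) / q ^ Suc n) \<le> real M / q * (1 / q) ^ n"
    using assms by (auto simp: power_divide divide_right_mono field_simps)
qed

lemma shift_Omega: "d \<in> Omega M \<Longrightarrow> shift k d \<in> Omega M"
  by (auto simp: Omega_def shift_def)

lemma shift_infnz: "infnz d \<Longrightarrow> infnz (shift k d)"
  unfolding infnz_def shift_def
proof (intro allI)
  fix N assume "\<forall>N. \<exists>n\<ge>N. d n \<noteq> 0"
  then obtain n where "n \<ge> N + k" "d n \<noteq> 0" by blast
  then show "\<exists>n\<ge>N. d (n + k) \<noteq> 0" by (intro exI[of _ "n - k"]) auto
qed

lemma shift_shift[simp]: "shift a (shift b d) = shift (a + b) d"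
  by (auto simp: shift_def add.assoc add.commute add.left_commute)

lemma shift_0[simp]: "shift 0 d = d" by (simp add: shift_def)

lemma val_split:
  assumes "d \<in> Omega M" "1 < q"
  shows "val q d = (\<Sum>i<k. real (d i) / q ^ Suc i) + val q (shift k d) / q ^ k"
proof -
  have s: "summable (\<lambda>i. real (d i) / q ^ Suc i)" by (rule summable_val[OF assms])
  have "val q d = (\<Sum>n. real (d (n + k)) / q ^ Suc (n + k)) + (\<Sum>i<k. real (d i) / q ^ Suc i)"
    unfolding val_def by (rule suminf_split_initial_segment[OF s])
  moreover have "(\<Sum>n. real (d (n + k)) / q ^ Suc (n + k)) = val q (shift k d) / q ^ k"
  proof -
    have "(\<Sum>n. real (d (n + k)) / q ^ Suc (n + k)) = (\<Sum>n. real (shift k d n) / q ^ Suc n / q ^ k)"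
      by (simp add: shift_def power_add field_simps)
    also have "\<dots> = val q (shift k d) / q ^ k"
      unfolding val_def by (rule suminf_divide[OF summable_val[OF shift_Omega[OF assms(1)] assms(2)]])
    finally show ?thesis .
  qed
  ultimately show ?thesis by simp
qed

lemma val_nonneg: "d \<in> Omega M \<Longrightarrow> 1 < q \<Longrightarrow> 0 \<le> val q d"
  unfolding val_def by (intro suminf_nonneg summable_val) auto

lemma val_pos: assumes "d \<in> Omega M" "1 < q" "infnz d" shows "0 < val q d"
proof -
  obtain n where "d n \<noteq> 0" using assms(3) unfolding infnz_def by blast
  then show ?thesis unfolding val_def using assms
    by (intro suminf_pos2[OF summable_val[OF assms(1,2)], of n]) auto
qed

lemma val_le: assumes "d \<in> Omega M" "1 < q" shows "val q d \<le> real M / (q - 1)"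
proof -
  have "val q d \<le> (\<Sum>i. (real M / q) * (1/q)^i)"
    unfolding val_def
  proof (rule suminf_le[OF _ summable_val[OF assms]])
    show "summable (\<lambda>i. (real M / q) * (1/q)^i)"
      using assms by (intro summable_mult summable_geometric) auto
    fix n
    have "d n \<le> M" using assms by (auto simp: Omega_def)
    then show "real (d n) / q ^ Suc n \<le> real M / q * (1 / q) ^ n"
      using assms by (auto simp: power_divide divide_right_mono field_simps)
  qed
  also have "\<dots> = real M / q * (1 / (1 - 1/q))"
    using assms by (subst suminf_mult) (auto intro!: summable_geometric simp: suminf_geometric)
  also have "\<dots> = real M / (q - 1)" using assms by (simp add: field_simps)
  finally show ?thesis .
qed

lemma val_Mp1: assumes "d \<in> Omega M" shows "val (real M + 1) d \<le> 1"
proof (cases "M = 0")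
  case True
  then have "d = (\<lambda>_. 0)" using assms by (auto simp: Omega_def)
  then show ?thesis by (simp add: val_def)
next
  case False
  then show ?thesis using val_le[OF assms, of "real M + 1"] by simp
qed

primrec gt :: "real \<Rightarrow> nat \<Rightarrow> real" where
  "gt q 0 = 1"
| "gt q (Suc n) = q * gt q n - of_int (\<lceil>q * gt q n\<rceil> - 1)"

definition gd :: "real \<Rightarrow> nat \<Rightarrow> nat" where
  "gd q n = nat (\<lceil>q * gt q n\<rceil> - 1)"

lemma gt_bounds: "1 < q \<Longrightarrow> 0 < gt q n \<and> gt q n \<le> 1"
proof (induction n)
  case (Suc n)
  then have "0 < q * gt q n" by auto
  then show ?case by (simp, linarith)
qed simp

lemma gd_real: assumes "1 < q" shows "real (gd q n) = of_int (\<lceil>q * gt q n\<rceil> - 1)"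
proof -
  have "0 < q * gt q n" using gt_bounds[OF assms] assms by auto
  then have "\<lceil>q * gt q n\<rceil> \<ge> 1" by linarith
  then show ?thesis unfolding gd_def by simp
qed

lemma gt_Suc: "1 < q \<Longrightarrow> gt q (Suc n) = q * gt q n - real (gd q n)"
  by (simp add: gd_real)

lemma gd_ceil: "1 < q \<Longrightarrow> q * gt q n \<le> real (gd q n) + 1"
  by (simp add: gd_real)

lemma gd_le: assumes "1 < q" "q \<le> real M + 1" shows "gd q n \<le> M"
proof -
  have "q * gt q n \<le> q * 1" using gt_bounds[OF assms(1), of n] assms
    by (intro mult_left_mono) auto
  then have "q * gt q n \<le> real M + 1" using assms by linarith
  then have "\<lceil>q * gt q n\<rceil> \<le> int M + 1" by linarith
  then show ?thesis unfolding gd_def by simp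
qed

lemma gd_partial: "1 < q \<Longrightarrow> (\<Sum>i<n. real (gd q i) / q ^ Suc i) = 1 - gt q n / q ^ n"
proof (induction n)
  case (Suc n)
  have "(\<Sum>i<Suc n. real (gd q i) / q ^ Suc i) = (1 - gt q n / q^n) + real (gd q n)/q^Suc n"
    using Suc by simp
  also have "\<dots> = 1 - (q*gt q n - real (gd q n))/q^Suc n" using Suc.prems by (simp add: field_simps)
  finally show ?case using gt_Suc[OF Suc.prems] by (simp del: gt.simps(2))
qed simp

lemma gd_Omega: "1 < q \<Longrightarrow> q \<le> real M + 1 \<Longrightarrow> gd q \<in> Omega M"
  using gd_le by (auto simp: Omega_def)

lemma gd_val: assumes "1 < q" "q \<le> real M + 1" shows "val q (gd q) = 1"
proof -
  have "(\<lambda>n. gt q n / q ^ n) \<longlonglongrightarrow> 0"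
  proof (rule real_tendsto_sandwich[of "\<lambda>n. 0" _ _ "\<lambda>n. (1/q)^n"])
    show "\<forall>\<^sub>F n in sequentially. gt q n / q ^ n \<le> (1 / q) ^ n"
      using gt_bounds[OF assms(1)] assms by (auto simp: power_divide divide_right_mono)
    show "\<forall>\<^sub>F n in sequentially. 0 \<le> gt q n / q ^ n"
      using gt_bounds[OF assms(1)] assms by (auto intro!: always_eventually divide_nonneg_pos less_imp_le)
    show "(\<lambda>n. (1 / q) ^ n) \<longlonglongrightarrow> 0" using assms by (intro LIMSEQ_power_zero) auto
  qed simp
  then have "(\<lambda>n. 1 - gt q n / q ^ n) \<longlonglongrightarrow> 1 - 0" by (intro tendsto_intros)
  then have "(\<lambda>i. real (gd q i) / q ^ Suc i) sums 1"
    unfolding sums_def using gd_partial[OF assms(1)] by simp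
  then show ?thesis unfolding val_def by (rule sums_unique[symmetric])
qed

lemma gd_sums: assumes "1 < q" "q \<le> real M + 1" shows "(\<lambda>i. real (gd q i) / q ^ Suc i) sums 1"
proof -
  have "(\<lambda>i. real (gd q i) / q ^ Suc i) sums (\<Sum>i. real (gd q i) / q ^ Suc i)"
    by (rule summable_sums[OF summable_val[OF gd_Omega[OF assms] assms(1)]])
  then show ?thesis using gd_val[OF assms] by (simp add: val_def)
qed

lemma gd_infnz: assumes "1 < q" shows "infnz (gd q)"
proof (rule ccontr)
  assume "\<not> infnz (gd q)"
  then obtain N where N: "\<And>n. n \<ge> N \<Longrightarrow> gd q n = 0" unfolding infnz_def by auto
  have e: "gt q (N + k) = q ^ k * gt q N" for k
    by (induction k) (auto simp del: gt.simps(2) simp: gt_Suc[OF assms] N)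
  obtain k where "q ^ k > 1 / gt q N"
    using real_arch_pow[of q "1 / gt q N"] assms by auto
  then have "q ^ k * gt q N > 1" using gt_bounds[OF assms, of N] by (simp add: field_simps)
  then have "gt q (N + k) > 1" using e[of k] by linarith
  then show False using gt_bounds[OF assms, of "N + k"] by simp
qed

lemma gd_max:
  assumes q: "1 < q" and e: "e \<in> Omega M" "infnz e" "val q e \<le> 1"
  shows "lex_le e (gd q)"
proof (rule ccontr)
  assume "\<not> lex_le e (gd q)"
  then obtain k where k: "\<forall>i<k. gd q i = e i" "gd q k < e k"
    by (auto simp: lex_not_le lex_less_def)
  have "val q e = (\<Sum>i<Suc k. real (e i) / q ^ Suc i) + val q (shift (Suc k) e) / q ^ Suc k"
    by (rule val_split[OF e(1) q])
  also have "(\<Sum>i<Suc k. real (e i) / q ^ Suc i) = (\<Sum>i<k. real (gd q i) / q ^ Suc i) + real (e k) / q ^ Suc k"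
    using k(1) by simp
  also have "(\<Sum>i<k. real (gd q i) / q ^ Suc i) = 1 - gt q k / q ^ k" by (rule gd_partial[OF q])
  finally have v: "val q e = 1 - gt q k / q ^ k + real (e k) / q ^ Suc k + val q (shift (Suc k) e) / q ^ Suc k" .
  have "real (e k) \<ge> real (gd q k) + 1" using k(2) by simp
  then have "real (e k) \<ge> q * gt q k" using gd_ceil[OF q, of k] by linarith
  then have "real (e k) / q ^ Suc k \<ge> q * gt q k / q ^ Suc k" using q by (intro divide_right_mono) auto
  also have "q * gt q k / q ^ Suc k = gt q k / q ^ k" using q by simp
  finally have 1: "real (e k) / q ^ Suc k \<ge> gt q k / q ^ k" .
  have "0 < val q (shift (Suc k) e)" by (rule val_pos[OF shift_Omega[OF e(1)] q shift_infnz[OF e(2)]])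
  then have "0 < val q (shift (Suc k) e) / q ^ Suc k" using q by simp
  with v 1 e(3) show False by linarith
qed

lemma lex_le_total: "lex_le x y \<or> lex_le y x"
  using lex_not_le lex_less_imp_le by blast

lemma alpha_eq: assumes "1 < q" "q \<le> real M + 1" shows "alpha M q = gd q"
  unfolding alpha_def
proof (rule the_equality)
  show "gd q \<in> qg_cands M q \<and> (\<forall>b\<in>qg_cands M q. lex_le b (gd q))"
    using gd_Omega[OF assms] gd_infnz[OF assms(1)] gd_sums[OF assms] gd_max[OF assms(1)]
    by (auto simp: qg_cands_def infnz_def val_def sums_unique[symmetric])
  fix a assume a: "a \<in> qg_cands M q \<and> (\<forall>b\<in>qg_cands M q. lex_le b a)"
  have "gd q \<in> qg_cands M q"
    using gd_Omega[OF assms] gd_infnz[OF assms(1)] gd_sums[OF assms] by (auto simp: qg_cands_def infnz_def)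
  then have "lex_le (gd q) a" using a by auto
  moreover have "lex_le a (gd q)" using a gd_max[OF assms(1), of a M]
    by (auto simp: qg_cands_def infnz_def val_def sums_unique[symmetric])
  ultimately show "a = gd q" by (rule lex_le_antisym[rotated])
qed

lemma alpha_props:
  assumes "1 < q" "q \<le> real M + 1"
  shows "alpha M q \<in> Omega M" "infnz (alpha M q)" "val q (alpha M q) = 1"
    "\<And>e. e \<in> Omega M \<Longrightarrow> infnz e \<Longrightarrow> val q e \<le> 1 \<Longrightarrow> lex_le e (alpha M q)"
  using alpha_eq[OF assms] gd_Omega[OF assms] gd_infnz[OF assms(1)] gd_val[OF assms] gd_max[OF assms(1)]
  by auto


lemma val_strict_mono:
  assumes d: "d \<in> Omega M" "infnz d" and q: "1 < q1" "q1 < q2"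
  shows "val q2 d < val q1 d"
proof -
  have s1: "summable (\<lambda>i. real (d i) / q1 ^ Suc i)" by (rule summable_val[OF d(1) q(1)])
  have s2: "summable (\<lambda>i. real (d i) / q2 ^ Suc i)" by (rule summable_val[OF d(1)]) (use q in auto)
  obtain n where n: "d n \<noteq> 0" using d(2) unfolding infnz_def by blast
  have le: "real (d i) / q2 ^ Suc i \<le> real (d i) / q1 ^ Suc i" for i
    using q by (intro divide_left_mono power_mono mult_pos_pos) auto
  have lt: "real (d n) / q2 ^ Suc n < real (d n) / q1 ^ Suc n"
    using q n by (intro divide_strict_left_mono power_strict_mono mult_pos_pos) auto
  have "0 < (\<Sum>i. real (d i) / q1 ^ Suc i - real (d i) / q2 ^ Suc i)"
    by (rule suminf_pos2[of _ n]) (use s1 s2 le lt in \<open>auto intro: summable_diff\<close>)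
  also have "\<dots> = val q1 d - val q2 d" unfolding val_def by (rule suminf_diff[OF s1 s2, symmetric])
  finally show ?thesis by simp
qed

lemma alpha_strict_mono:
  assumes "1 < q1" "q1 < q2" "q2 \<le> real M + 1"
  shows "lex_less (alpha M q1) (alpha M q2)"
proof -
  have a1: "1 < q1" "q1 \<le> real M + 1" and a2: "1 < q2" "q2 \<le> real M + 1" using assms by auto
  note p1 = alpha_props[OF a1] and p2 = alpha_props[OF a2]
  have v: "val q2 (alpha M q1) < 1"
    using val_strict_mono[OF p1(1,2) assms(1,2)] p1(3) by simp
  then have "lex_le (alpha M q1) (alpha M q2)" using p2(4)[OF p1(1,2)] by simp
  moreover have "alpha M q1 \<noteq> alpha M q2" using v p2(3) by auto
  ultimately show ?thesis by (simp add: lex_le_def)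
qed

lemma alpha_le_imp:
  assumes "1 < q1" "q1 \<le> real M + 1" "1 < q2" "q2 \<le> real M + 1"
    "lex_le (alpha M q1) (alpha M q2)"
  shows "q1 \<le> q2"
proof (rule ccontr)
  assume "\<not> q1 \<le> q2"
  then have "lex_less (alpha M q2) (alpha M q1)" using assms by (intro alpha_strict_mono) auto
  then show False using assms(5) lex_not_le by blast
qed

lemma alpha_less_imp:
  assumes "1 < q1" "q1 \<le> real M + 1" "1 < q2" "q2 \<le> real M + 1"
    "lex_less (alpha M q1) (alpha M q2)"
  shows "q1 < q2"
proof (rule ccontr)
  assume "\<not> q1 < q2"
  then have "q2 \<le> q1" by simp
  then have "lex_le (alpha M q2) (alpha M q1)"
    using assms alpha_strict_mono[of q2 q1 M] by (cases "q2 = q1") (auto simp: lex_le_def)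
  then show False using assms(5) lex_not_le by blast
qed

lemma alpha_inj:
  assumes "1 < q1" "q1 \<le> real M + 1" "1 < q2" "q2 \<le> real M + 1" "alpha M q1 = alpha M q2"
  shows "q1 = q2"
  using alpha_le_imp[OF assms(1-4)] alpha_le_imp[OF assms(3,4,1,2)] assms(5) by force

lemma aux_ineq1:
  fixes Q P P0 F V fn :: real
  assumes "Q > 0" "fn = P + F/Q" "1 = P0 + V/Q" "P \<le> P0 - 1/Q" "V > 0"
  shows "fn - 1 < (F-1)/Q"
proof -
  have "fn - 1 = (P - P0) + (F - V)/Q" using assms(2,3) by (simp add: diff_divide_distrib)
  also have "\<dots> \<le> -1/Q + (F - V)/Q" using assms(4) by simp
  also have "\<dots> = (F - 1 - V)/Q" by (simp add: diff_divide_distrib)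
  also have "\<dots> < (F - 1)/Q" using assms(1,5) by (intro divide_strict_right_mono) auto
  finally show ?thesis .
qed

lemma parry_K:
  assumes d: "d \<in> Omega M" "infnz d" and q: "1 < q" and v: "val q d = 1"
    and sh: "\<And>n. lex_le (shift n d) d"
  shows "val q (shift n d) \<le> 1"
proof -
  define f where "f n = val q (shift n d)" for n
  have bdd: "bdd_above (range f)"
    unfolding f_def using val_le[OF shift_Omega[OF d(1)] q] by (intro bdd_aboveI2) auto
  define S where "S = Sup (range f)"
  have fS: "f n \<le> S" for n unfolding S_def by (rule cSUP_upper[OF _ bdd]) auto
  show ?thesis
  proof (rule ccontr)
    assume "\<not> val q (shift n d) \<le> 1"
    then have S1: "S > 1" using fS[of n] by (simp add: f_def)
    have key: "f n \<le> 1 + (S - 1) / q" for n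
    proof (cases "shift n d = d")
      case True then show ?thesis using v S1 q by (simp add: f_def)
    next
      case False
      then have "lex_less (shift n d) d" using sh[of n] by (simp add: lex_le_def)
      then obtain k where k: "\<forall>i<k. d (i + n) = d i" "d (k + n) < d k"
        unfolding lex_less_def shift_def by auto
      have e1: "f n = (\<Sum>i<Suc k. real (shift n d i) / q ^ Suc i) + f (Suc k + n) / q ^ Suc k"
        unfolding f_def by (subst val_split[OF shift_Omega[OF d(1)] q, of _ "Suc k"]) simp
      have e0: "1 = (\<Sum>i<Suc k. real (d i) / q ^ Suc i) + val q (shift (Suc k) d) / q ^ Suc k"
        using val_split[OF d(1) q, of "Suc k"] v by simp
      have "(\<Sum>i<Suc k. real (shift n d i) / q ^ Suc i) = (\<Sum>i<k. real (d i) / q ^ Suc i) + real (d (k + n)) / q ^ Suc k"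
        using k(1) by (simp add: shift_def)
      moreover have "real (d (k + n)) \<le> real (d k) - 1" using k(2) by simp
      ultimately have "(\<Sum>i<Suc k. real (shift n d i) / q ^ Suc i) \<le> (\<Sum>i<Suc k. real (d i) / q ^ Suc i) - 1 / q ^ Suc k"
        using q by (simp add: divide_right_mono diff_divide_distrib[symmetric])
      moreover have "0 < val q (shift (Suc k) d)" by (rule val_pos[OF shift_Omega[OF d(1)] q shift_infnz[OF d(2)]])
      ultimately have "f n - 1 < (f (Suc k + n) - 1) / q ^ Suc k"
        using e1 e0 q by (intro aux_ineq1) auto
      also have "\<dots> \<le> (S - 1) / q ^ Suc k" using fS q by (intro divide_right_mono) auto
      also have "\<dots> \<le> (S - 1) / q"
        using S1 q by (intro divide_left_mono) (auto simp: order_less_imp_le intro!: mult_pos_pos one_le_power mult_le_cancel_left1[THEN iffD2])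
      finally show ?thesis by simp
    qed
    have "Sup (range f) \<le> 1 + (S - 1) / q" by (rule cSUP_least) (use key in auto)
    then have "S \<le> 1 + (S - 1) / q" by (simp add: S_def)
    then have "(S - 1) * q \<le> (S - 1)" using q by (simp add: field_simps)
    then show False using S1 q by (simp add: mult_le_cancel_left1)
  qed
qed

lemma aux_ineq2:
  fixes Q P Pg Pd G D VG VD vg vd :: real
  assumes "Q > 0" "vg = Pg + VG/Q" "vd = Pd + VD/Q" "Pg = P + G/Q" "Pd = P + D/Q" "G \<ge> D + 1"
    "VD \<le> 1" "VG > 0"
  shows "vd < vg"
proof -
  have "vd = P + (D + VD)/Q" using assms by (simp add: add_divide_distrib)
  also have "\<dots> < P + (G + VG)/Q" using assms by (intro add_strict_left_mono divide_strict_right_mono) auto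
  also have "\<dots> = vg" using assms by (simp add: add_divide_distrib)
  finally show ?thesis .
qed

lemma parry_alpha:
  assumes d: "d \<in> Omega M" "infnz d" and q: "1 < q" "q \<le> real M + 1" and v: "val q d = 1"
    and sh: "\<And>n. lex_le (shift n d) d"
  shows "alpha M q = d"
proof -
  note p = alpha_props[OF q]
  define g where "g = alpha M q"
  have dg: "lex_le d g" using p(4)[OF d] v by (simp add: g_def)
  show ?thesis
  proof (rule ccontr)
    assume "alpha M q \<noteq> d"
    then have "lex_less d g" using dg by (auto simp: lex_le_def g_def)
    then obtain k where k: "\<forall>i<k. d i = g i" "d k < g k" unfolding lex_less_def by auto
    have eg: "val q g = (\<Sum>i<Suc k. real (g i) / q ^ Suc i) + val q (shift (Suc k) g) / q ^ Suc k"
      by (rule val_split[OF p(1)[folded g_def] q(1)])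
    have ed: "val q d = (\<Sum>i<Suc k. real (d i) / q ^ Suc i) + val q (shift (Suc k) d) / q ^ Suc k"
      by (rule val_split[OF d(1) q(1)])
    have "(\<Sum>i<Suc k. real (g i) / q ^ Suc i) = (\<Sum>i<k. real (d i) / q ^ Suc i) + real (g k) / q ^ Suc k"
      using k(1) by simp
    moreover have "(\<Sum>i<Suc k. real (d i) / q ^ Suc i) = (\<Sum>i<k. real (d i) / q ^ Suc i) + real (d k) / q ^ Suc k"
      by simp
    moreover have "real (g k) \<ge> real (d k) + 1" using k(2) by simp
    moreover have "val q (shift (Suc k) d) \<le> 1" by (rule parry_K[OF d q(1) v sh])
    moreover have "0 < val q (shift (Suc k) g)"
      unfolding g_def by (rule val_pos[OF shift_Omega[OF p(1)] q(1) shift_infnz[OF p(2)]])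
    ultimately have "val q d < val q g"
      by (intro aux_ineq2[OF _ eg ed, of "\<Sum>i<k. real (d i) / q ^ Suc i" "real (g k)" "real (d k)"]) (use q in auto)
    then show False using v p(3) by (simp add: g_def)
  qed
qed

lemma sum_two_le:
  fixes d :: "nat \<Rightarrow> nat"
  assumes "n1 < n2" "n2 < N" "d n1 \<noteq> 0" "d n2 \<noteq> 0"
  shows "2 \<le> (\<Sum>i<N. d i)"
proof -
  have "(\<Sum>i\<in>{n1, n2}. d i) \<le> (\<Sum>i<N. d i)"
    using assms by (intro sum_mono2) auto
  moreover have "(\<Sum>i\<in>{n1, n2}. d i) = d n1 + d n2" using assms by simp
  ultimately show ?thesis using assms by linarith
qed

lemma parry_exists:
  assumes M: "M \<ge> 1" and d: "d \<in> Omega M" "infnz d" and sh: "\<And>n. lex_le (shift n d) d"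
  shows "\<exists>q. 1 < q \<and> q \<le> real M + 1 \<and> alpha M q = d"
proof -
  obtain n1 where n1: "d n1 \<noteq> 0" using d(2) unfolding infnz_def by blast
  obtain n2 where n2: "n2 \<ge> Suc n1" "d n2 \<noteq> 0" using d(2) unfolding infnz_def by blast
  define N where "N = Suc n2"
  have N: "2 \<le> (\<Sum>i<N. real (d i))"
    using sum_two_le[of n1 n2 N d] n1 n2 unfolding N_def by (simp flip: of_nat_sum)
  have Npos: "N > 0" unfolding N_def by simp
  define x0 where "x0 = root N (1/2)"
  have x0: "0 < x0" "x0 < 1" "x0 ^ N = 1/2" unfolding x0_def using Npos by auto
  define a where "a = 1 / (real M + 1)"
  have a: "0 < a" "a < 1" "a \<le> 1/2" using M by (auto simp: a_def field_simps)
  define x1 where "x1 = max x0 a"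
  have "x0 ^ N \<le> x1 ^ N" using x0 by (intro power_mono) (auto simp: x1_def)
  then have x1: "0 < x1" "x1 < 1" "a \<le> x1" "x1 ^ N \<ge> 1/2"
    unfolding x1_def using x0 a by (auto simp: max_def)
  define f where "f x = (\<Sum>i. real (d i) * x ^ Suc i)" for x :: real
  have dM: "real (d i) \<le> real M" for i using d by (auto simp: Omega_def)
  define K where "K = (1 + x1) / 2"
  have K: "x1 < K" "K < 1" "0 < K" unfolding K_def using x1 by auto
  have sumK: "summable (\<lambda>n. real (d n) * K ^ n)"
  proof (rule summable_comparison_test')
    show "summable (\<lambda>n. real M * K ^ n)" using K by (intro summable_mult summable_geometric) auto
    fix n show "norm (real (d n) * K ^ n) \<le> real M * K ^ n" using K dM[of n] by (auto intro: mult_right_mono)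
  qed
  have summ: "summable (\<lambda>i. real (d i) * x ^ i)" if "0 \<le> x" "x \<le> K" for x
  proof (rule summable_comparison_test')
    show "summable (\<lambda>n. real M * K ^ n)" using K by (intro summable_mult summable_geometric) auto
    fix n show "norm (real (d n) * x ^ n) \<le> real M * K ^ n" using K dM[of n] that
      by (auto intro!: mult_mono power_mono)
  qed
  have fx: "f x = x * (\<Sum>i. real (d i) * x ^ i)" if "0 \<le> x" "x \<le> K" for x
    unfolding f_def using suminf_mult[OF summ[OF that], of x] by (simp add: algebra_simps)
  have cont: "continuous_on {a..x1} f"
  proof (rule continuous_at_imp_continuous_on, intro ballI)
    fix x assume x: "x \<in> {a..x1}"
    have c1: "isCont (\<lambda>x. \<Sum>i. real (d i) * x ^ i) x"
      by (rule isCont_powser[OF sumK]) (use x K a in auto)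
    have c2: "isCont (\<lambda>x. x * (\<Sum>i. real (d i) * x ^ i)) x"
      using c1 by (intro isCont_mult continuous_ident)
    have ev: "\<forall>\<^sub>F y in nhds x. f y = y * (\<Sum>i. real (d i) * y ^ i)"
    proof -
      have "\<forall>\<^sub>F y in nhds x. y \<in> {0<..<K}" using x a K by (intro eventually_nhds_in_open) auto
      then show ?thesis
      proof (rule eventually_mono)
        fix y assume "y \<in> {0<..<K}"
        then show "f y = y * (\<Sum>i. real (d i) * y ^ i)" using fx by auto
      qed
    qed
    show "isCont f x" using isCont_cong[OF ev] c2 by simp
  qed
  have val_f: "val (1/x) d = f x" if "0 < x" for x
    unfolding val_def f_def using that by (simp add: power_one_over)
  have fa: "f a \<le> 1" using val_Mp1[OF d(1)] val_f[of a] a by (simp add: a_def)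
  have fx1: "f x1 \<ge> 1"
  proof -
    have "(\<Sum>i<N. real (d i) * x1 ^ Suc i) \<le> f x1"
      unfolding f_def using summ[of x1] x1 K
      by (intro sum_le_suminf) (auto intro: summable_mult2[of _ x1, THEN summable_cong[THEN iffD1, rotated]] simp: algebra_simps)
    moreover have "(\<Sum>i<N. real (d i) * x1 ^ N) \<le> (\<Sum>i<N. real (d i) * x1 ^ Suc i)"
      using x1 by (intro sum_mono mult_left_mono power_decreasing) auto
    moreover have "(\<Sum>i<N. real (d i) * x1 ^ N) = (\<Sum>i<N. real (d i)) * x1 ^ N"
      by (simp add: sum_distrib_right)
    moreover have "(\<Sum>i<N. real (d i)) * x1 ^ N \<ge> 2 * (1/2)"
      using N x1 by (intro mult_mono) auto
    ultimately show ?thesis by linarith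
  qed
  obtain x where x: "a \<le> x" "x \<le> x1" "f x = 1"
    using IVT'[of f a 1 x1, OF fa fx1 x1(3) cont] by auto
  define q where "q = 1 / x"
  have xpos: "0 < x" using x a by auto
  have q: "1 < q" "q \<le> real M + 1"
    unfolding q_def using x x1 xpos a by (auto simp: a_def field_simps)
  have "val q d = 1" unfolding q_def using val_f[OF xpos] x by simp
  then have "alpha M q = d" by (intro parry_alpha[OF d q _ sh])
  then show ?thesis using q by blast
qed


definition wlt :: "nat list \<Rightarrow> nat list \<Rightarrow> bool" where
  "wlt u v \<longleftrightarrow> (\<exists>t<length u. (\<forall>j<t. u!j = v!j) \<and> u!t < v!t)"

abbreviation wle' :: "nat list \<Rightarrow> nat list \<Rightarrow> bool" where
  "wle' u v \<equiv> u = v \<or> wlt u v"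

lemma wlt_irrefl[simp]: "\<not> wlt u u" by (auto simp: wlt_def)

lemma wlt_trans: "length u = length v \<Longrightarrow> wlt u v \<Longrightarrow> wlt v w \<Longrightarrow> wlt u w"
  unfolding wlt_def
proof (elim exE conjE)
  fix t1 t2 assume l: "length u = length v" and a1: "t1 < length u" "\<forall>j<t1. u ! j = v ! j" "u ! t1 < v ! t1"
    and a2: "t2 < length v" "\<forall>j<t2. v ! j = w ! j" "v ! t2 < w ! t2"
  show "\<exists>t<length u. (\<forall>j<t. u ! j = w ! j) \<and> u ! t < w ! t"
  proof (cases "t1 < t2")
    case True then show ?thesis using a1 a2 by (intro exI[of _ t1]) auto
  next
    case False then show ?thesis using a1 a2 l
      by (intro exI[of _ t2]) (auto simp: not_less order_le_less)
  qed
qed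

lemma wlt_asym: "length u = length v \<Longrightarrow> wlt u v \<Longrightarrow> \<not> wlt v u"
  using wlt_trans wlt_irrefl by metis

lemma wle_trans: "length u = length v \<Longrightarrow> wle' u v \<Longrightarrow> wle' v w \<Longrightarrow> wle' u w"
  using wlt_trans by metis

lemma wle_lt_trans: "length u = length v \<Longrightarrow> wle' u v \<Longrightarrow> wlt v w \<Longrightarrow> wlt u w"
  using wlt_trans by metis

lemma wlt_le_trans: "length u = length v \<Longrightarrow> wlt u v \<Longrightarrow> wle' v w \<Longrightarrow> wlt u w"
  using wlt_trans by metis

lemma wlt_tri: assumes "length u = length v" shows "u = v \<or> wlt u v \<or> wlt v u"
proof (cases "u = v")
  case False
  then obtain k where k: "k < length u" "u ! k \<noteq> v ! k" using assms nth_equalityI by blast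
  define n where "n = (LEAST n. n < length u \<and> u ! n \<noteq> v ! n)"
  have n1: "n < length u \<and> u ! n \<noteq> v ! n" unfolding n_def by (rule LeastI[of _ k]) (use k in auto)
  have n2: "\<forall>i<n. u ! i = v ! i" using not_less_Least n1 unfolding n_def
    by (metis (mono_tags, lifting) order.strict_trans)
  show ?thesis using n1 n2 assms unfolding wlt_def
    by (cases "u ! n < v ! n") (auto intro!: exI[of _ n] simp: not_less order_le_less)
qed simp

lemma wle_antisym: "length u = length v \<Longrightarrow> wle' u v \<Longrightarrow> wle' v u \<Longrightarrow> u = v"
  using wlt_asym by metis

lemma wlt_not_le: "length u = length v \<Longrightarrow> wlt u v \<Longrightarrow> \<not> wle' v u"
  using wlt_asym by fastforce

lemma wlt_append:
  assumes "length u1 = length v1"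
  shows "wlt (u1 @ u2) (v1 @ v2) \<longleftrightarrow> wlt u1 v1 \<or> (u1 = v1 \<and> wlt u2 v2)"
proof
  assume "wlt (u1 @ u2) (v1 @ v2)"
  then obtain t where t: "t < length (u1 @ u2)" "\<forall>j<t. (u1 @ u2) ! j = (v1 @ v2) ! j" "(u1 @ u2) ! t < (v1 @ v2) ! t"
    unfolding wlt_def by blast
  show "wlt u1 v1 \<or> (u1 = v1 \<and> wlt u2 v2)"
  proof (cases "t < length u1")
    case True
    then have "wlt u1 v1" using t assms unfolding wlt_def
      by (intro exI[of _ t]) (auto simp: nth_append)
    then show ?thesis ..
  next
    case False
    have "u1 = v1"
    proof (rule nth_equalityI)
      fix j assume "j < length u1"
      then show "u1 ! j = v1 ! j" using t(2)[rule_format, of j] False assms by (auto simp: nth_append)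
    qed (use assms in simp)
    moreover have "wlt u2 v2" unfolding wlt_def
    proof (intro exI[of _ "t - length u1"] conjI allI impI)
      show "t - length u1 < length u2" using t(1) False by auto
      show "u2 ! (t - length u1) < v2 ! (t - length u1)" using t(3) False assms by (auto simp: nth_append)
      fix j assume "j < t - length u1"
      then show "u2 ! j = v2 ! j" using t(2)[rule_format, of "j + length u1"] assms by (auto simp: nth_append)
    qed
    ultimately show ?thesis by simp
  qed
next
  assume "wlt u1 v1 \<or> (u1 = v1 \<and> wlt u2 v2)"
  then show "wlt (u1 @ u2) (v1 @ v2)"
  proof
    assume "wlt u1 v1"
    then obtain t where "t < length u1" "\<forall>j<t. u1 ! j = v1 ! j" "u1 ! t < v1 ! t" unfolding wlt_def by blast
    then show ?thesis unfolding wlt_def using assms by (intro exI[of _ t]) (auto simp: nth_append)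
  next
    assume a: "u1 = v1 \<and> wlt u2 v2"
    then obtain t where "t < length u2" "\<forall>j<t. u2 ! j = v2 ! j" "u2 ! t < v2 ! t" unfolding wlt_def by blast
    then show ?thesis unfolding wlt_def using a
      by (intro exI[of _ "length u1 + t"]) (auto simp: nth_append)
  qed
qed

lemma wless_iff: "length u = length v \<Longrightarrow> wless u v \<longleftrightarrow> wlt u v"
  unfolding wless_def lex_less_def wlt_def pad0_def
proof
  assume l: "length u = length v"
  assume "\<exists>n. (\<forall>i<n. (if i < length u then u ! i else 0) = (if i < length v then v ! i else 0)) \<and>
        (if n < length u then u ! n else 0) < (if n < length v then v ! n else 0)"
  then obtain n where n: "\<forall>i<n. (if i < length u then u ! i else 0) = (if i < length v then v ! i else 0)"
    "(if n < length u then u ! n else 0) < (if n < length v then v ! n else 0)" by blast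
  have "n < length u" using n(2) l by (auto split: if_splits)
  then show "\<exists>t<length u. (\<forall>j<t. u ! j = v ! j) \<and> u ! t < v ! t"
  proof (intro exI[of _ n] conjI allI impI)
    fix j assume "j < n" then show "u ! j = v ! j" using n(1) l \<open>n < length u\<close> by (metis order.strict_trans)
  qed (use n l \<open>n < length u\<close> in auto)
next
  assume l: "length u = length v"
  assume "\<exists>t<length u. (\<forall>j<t. u ! j = v ! j) \<and> u ! t < v ! t"
  then obtain t where "t<length u" "\<forall>j<t. u ! j = v ! j" "u ! t < v ! t" by blast
  then show "\<exists>n. (\<forall>i<n. (if i < length u then u ! i else 0) = (if i < length v then v ! i else 0)) \<and>
        (if n < length u then u ! n else 0) < (if n < length v then v ! n else 0)"
    using l by (intro exI[of _ t]) auto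
qed

lemma pad0_inj: "length u = length v \<Longrightarrow> pad0 u = pad0 v \<Longrightarrow> u = v"
proof (rule nth_equalityI)
  fix i assume "length u = length v" "pad0 u = pad0 v" "i < length u"
  then have "pad0 u i = pad0 v i" by simp
  then show "u ! i = v ! i" using \<open>i < length u\<close> \<open>length u = length v\<close> by (simp add: pad0_def)
qed

lemma wle_iff: "length u = length v \<Longrightarrow> wle u v \<longleftrightarrow> wle' u v"
  unfolding wle_def lex_le_def using wless_iff[of u v] pad0_inj[of u v] by (auto simp: wless_def)

lemma length_wplus[simp]: "u \<noteq> [] \<Longrightarrow> length (wplus u) = length u"
  by (simp add: wplus_def)

lemma wplus_nth: "u \<noteq> [] \<Longrightarrow> j < length u \<Longrightarrow> wplus u ! j = (if j = length u - 1 then u ! j + 1 else u ! j)"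
  by (auto simp: wplus_def nth_append last_conv_nth nth_butlast)

lemma wplus_ne[simp]: "wplus u \<noteq> []" by (simp add: wplus_def)
lemma wrefl_Nil[simp]: "wrefl M u = [] \<longleftrightarrow> u = []" by (simp add: wrefl_def)

lemma length_wrefl[simp]: "length (wrefl M u) = length u" by (simp add: wrefl_def)

lemma wrefl_nth[simp]: "j < length u \<Longrightarrow> wrefl M u ! j = M - u ! j" by (simp add: wrefl_def)

lemma wrefl_wrefl: "\<forall>x\<in>set u. x \<le> M \<Longrightarrow> wrefl M (wrefl M u) = u"
  by (rule nth_equalityI) (auto simp: nth_mem)

lemma wrefl_le: "\<forall>x\<in>set (wrefl M u). x \<le> M" by (auto simp: wrefl_def)

lemma wrefl_append: "wrefl M (u @ v) = wrefl M u @ wrefl M v" by (simp add: wrefl_def)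
lemma wrefl_take: "wrefl M (take i u) = take i (wrefl M u)" by (simp add: wrefl_def take_map)
lemma wrefl_drop: "wrefl M (drop i u) = drop i (wrefl M u)" by (simp add: wrefl_def drop_map)

lemma wlt_wrefl:
  assumes "length u = length v" "\<forall>x\<in>set u. x \<le> M" "\<forall>x\<in>set v. x \<le> M" "wlt u v"
  shows "wlt (wrefl M v) (wrefl M u)"
proof -
  obtain t where t: "t < length u" "\<forall>j<t. u ! j = v ! j" "u ! t < v ! t" using assms(4) unfolding wlt_def by blast
  have "v ! t \<le> M" using assms(1,3) t(1) by (auto simp: nth_mem)
  then show ?thesis unfolding wlt_def using t assms(1) by (intro exI[of _ t]) auto
qed

lemma wle_wrefl:
  assumes "length u = length v" "\<forall>x\<in>set u. x \<le> M" "\<forall>x\<in>set v. x \<le> M" "wle' u v"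
  shows "wle' (wrefl M v) (wrefl M u)"
  using wlt_wrefl[OF assms(1-3)] assms(4) by auto

lemma wlt_wplus: "u \<noteq> [] \<Longrightarrow> wlt u (wplus u)"
  unfolding wlt_def by (intro exI[of _ "length u - 1"]) (auto simp: wplus_nth)

lemma wrefl_wplus_lt:
  assumes "u \<noteq> []" "last u < M"
  shows "wlt (wrefl M (wplus u)) (wrefl M u)"
  unfolding wlt_def using assms
  by (intro exI[of _ "length u - 1"]) (auto simp: wplus_nth last_conv_nth)

lemma wplus_last_ok: "u \<noteq> [] \<Longrightarrow> last u < M \<Longrightarrow> \<forall>x\<in>set u. x \<le> M \<Longrightarrow> \<forall>x\<in>set (wplus u). x \<le> M"
  by (auto simp: wplus_def dest: in_set_butlastD)

lemma wlt_wplus_cases: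
  assumes "length u = length w" "u \<noteq> []" "wlt u w"
  shows "wplus u = w \<or> wlt (wplus u) w"
proof -
  obtain t where t: "t < length u" "\<forall>j<t. u ! j = w ! j" "u ! t < w ! t" using assms(3) unfolding wlt_def by blast
  show ?thesis
  proof (cases "t = length u - 1")
    case False
    then show ?thesis using t assms unfolding wlt_def
      by (intro disjI2 exI[of _ t]) (auto simp: wplus_nth)
  next
    case True
    show ?thesis
    proof (cases "u ! t + 1 = w ! t")
      case True2: True
      have "wplus u = w"
      proof (rule nth_equalityI)
        fix i assume "i < length (wplus u)"
        then have "i < length u" using assms by simp
        then show "wplus u ! i = w ! i" using assms t True True2
          by (cases "i < t") (auto simp: wplus_nth)
      qed (use assms in simp)
      then show ?thesis ..
    next
      case False
      then show ?thesis using t assms True unfolding wlt_def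
        by (intro disjI2 exI[of _ t]) (auto simp: wplus_nth)
    qed
  qed
qed

lemma wle_wplus_between:
  assumes "length w = length u" "u \<noteq> []" "wle' u w" "wle' w (wplus u)"
  shows "w = u \<or> w = wplus u"
proof (rule ccontr)
  assume a: "\<not> (w = u \<or> w = wplus u)"
  then have "wlt u w" using assms(3) by auto
  then have "wplus u = w \<or> wlt (wplus u) w" using wlt_wplus_cases assms by auto
  then have "wlt (wplus u) w" using a by auto
  then show False using assms(4) a wlt_asym[of w "wplus u"] assms(1,2) by auto
qed

lemma wplus_append: "v \<noteq> [] \<Longrightarrow> wplus (u @ v) = u @ wplus v"
  by (simp add: wplus_def butlast_append)

lemma drop_wplus: "i < length u \<Longrightarrow> drop i (wplus u) = wplus (drop i u)"
  by (simp add: wplus_def drop_butlast last_drop butlast_append)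

lemma take_wplus: "i < length u \<Longrightarrow> take i (wplus u) = take i u"
  by (simp add: wplus_def take_butlast)


definition seg :: "(nat \<Rightarrow> nat) \<Rightarrow> nat \<Rightarrow> nat \<Rightarrow> nat list" where
  "seg x p l = map (\<lambda>j. x (p + j)) [0..<l]"

lemma length_seg[simp]: "length (seg x p l) = l" by (simp add: seg_def)
lemma seg_Nil[simp]: "seg x p l = [] \<longleftrightarrow> l = 0" by (simp add: seg_def)
lemma seg_nth[simp]: "j < l \<Longrightarrow> seg x p l ! j = x (p + j)" by (simp add: seg_def)

lemma seg_eq_iff: "seg x p l = seg x' p l \<longleftrightarrow> (\<forall>j<l. x (p+j) = x' (p+j))"
  by (auto simp: seg_def)

lemma seq_lt:
  assumes "\<forall>j<p. x j = x' j" "wlt (seg x p l) (seg x' p l)"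
  shows "lex_less x x'"
proof -
  obtain t where t: "t < l" "\<forall>j<t. x (p + j) = x' (p + j)" "x (p + t) < x' (p + t)"
    using assms(2) unfolding wlt_def by auto
  show ?thesis unfolding lex_less_def
  proof (intro exI[of _ "p + t"] conjI allI impI)
    fix i assume "i < p + t"
    then show "x i = x' i" using assms(1) t(2)[rule_format, of "i - p"] by (cases "i < p") auto
  qed (use t in auto)
qed

lemma seq_le:
  assumes "lex_le x x'" "\<forall>j<p. x j = x' j"
  shows "wle' (seg x p l) (seg x' p l)"
proof (cases "x = x'")
  case False
  then obtain n where n: "\<forall>i<n. x i = x' i" "x n < x' n" using assms(1) by (auto simp: lex_le_def lex_less_def)
  have "p \<le> n" using n assms(2) by (metis less_irrefl not_le)
  show ?thesis
  proof (cases "n < p + l")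
    case True
    then have "wlt (seg x p l) (seg x' p l)" unfolding wlt_def using n \<open>p \<le> n\<close>
      by (intro exI[of _ "n - p"]) auto
    then show ?thesis ..
  next
    case False
    then show ?thesis using n by (auto simp: seg_eq_iff)
  qed
qed simp

lemma seg_append: "seg x p (l1 + l2) = seg x p l1 @ seg x (p + l1) l2"
  by (rule nth_equalityI) (auto simp: nth_append add.assoc)

lemma seg_shift: "seg (shift n x) p l = seg x (n + p) l"
  by (auto simp: seg_def shift_def add.commute add.left_commute)

lemma seg_srefl: "seg (srefl M x) p l = wrefl M (seg x p l)"
  by (auto simp: seg_def srefl_def wrefl_def)

definition blk :: "nat \<Rightarrow> (nat \<Rightarrow> nat) \<Rightarrow> nat \<Rightarrow> nat list" where
  "blk m x k = seg x (k * m) m"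

lemma blk_nth: "j < m \<Longrightarrow> blk m x k ! j = x (k * m + j)" by (simp add: blk_def)

lemma blk_decomp: "0 < m \<Longrightarrow> x j = blk m x (j div m) ! (j mod m)"
  by (simp add: blk_nth)

lemma blk_ext: "0 < m \<Longrightarrow> (\<And>k. blk m x k = blk m x' k) \<Longrightarrow> x = x'"
  by (rule ext) (metis blk_decomp)

lemma blk_agree:
  assumes "0 < m" "\<forall>t<k. blk m x t = blk m x' t"
  shows "\<forall>j<k*m. x j = x' j"
proof (intro allI impI)
  fix j assume "j < k * m"
  then have "j div m < k" using assms(1) by (simp add: div_less_iff_less_mult)
  then show "x j = x' j" using assms blk_decomp[of m x j] blk_decomp[of m x' j] by auto
qed

lemma blk_lt: "0 < m \<Longrightarrow> \<forall>t<k. blk m x t = blk m x' t \<Longrightarrow> wlt (blk m x k) (blk m x' k) \<Longrightarrow> lex_less x x'"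
  unfolding blk_def by (rule seq_lt[OF blk_agree[unfolded blk_def]])

lemma blk_le: "0 < m \<Longrightarrow> lex_le x x' \<Longrightarrow> \<forall>t<k. blk m x t = blk m x' t \<Longrightarrow> wle' (blk m x k) (blk m x' k)"
  unfolding blk_def by (rule seq_le[OF _ blk_agree[unfolded blk_def]])

lemma blk_shift: "blk m (shift (i * m) x) t = blk m x (i + t)"
  by (simp add: blk_def seg_shift algebra_simps)

lemma blk_srefl: "blk m (srefl M x) k = wrefl M (blk m x k)"
  by (simp add: blk_def seg_srefl)

lemma length_blk[simp]: "length (blk m x k) = m" by (simp add: blk_def)

lemma srefl_srefl: "x \<in> Omega M \<Longrightarrow> srefl M (srefl M x) = x"
  by (auto simp: srefl_def Omega_def fun_eq_iff)

lemma srefl_Omega: "srefl M x \<in> Omega M" by (auto simp: srefl_def Omega_def)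

lemma lex_less_srefl:
  assumes "x \<in> Omega M" "x' \<in> Omega M" "lex_less x x'"
  shows "lex_less (srefl M x') (srefl M x)"
proof -
  obtain n where n: "\<forall>i<n. x i = x' i" "x n < x' n" using assms(3) unfolding lex_less_def by auto
  have "x' n \<le> M" using assms(2) by (auto simp: Omega_def)
  then show ?thesis unfolding lex_less_def srefl_def using n by (intro exI[of _ n]) auto
qed

lemma lex_le_srefl:
  "x \<in> Omega M \<Longrightarrow> x' \<in> Omega M \<Longrightarrow> lex_le x x' \<Longrightarrow> lex_le (srefl M x') (srefl M x)"
  using lex_less_srefl by (auto simp: lex_le_def)

lemma lex_le_srefl_iff:
  "x \<in> Omega M \<Longrightarrow> x' \<in> Omega M \<Longrightarrow> lex_le (srefl M x') (srefl M x) \<longleftrightarrow> lex_le x x'"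
  using lex_le_srefl[of "srefl M x'" M "srefl M x"] lex_le_srefl[of x M x']
  by (auto simp: srefl_srefl srefl_Omega)

lemma lex_le_prefix_cancel:
  assumes "lex_le x x'" "\<forall>j<l. x j = x' j"
  shows "lex_le (shift l x) (shift l x')"
proof (cases "x = x'")
  case False
  then obtain n where n: "\<forall>i<n. x i = x' i" "x n < x' n" using assms(1) by (auto simp: lex_le_def lex_less_def)
  have "l \<le> n" using n assms(2) by (metis less_irrefl not_le)
  then show ?thesis unfolding lex_le_def lex_less_def shift_def using n
    by (intro disjI2 exI[of _ "n - l"]) auto
qed simp


definition okw :: "nat \<Rightarrow> nat list \<Rightarrow> bool" where
  "okw M c \<longleftrightarrow> c \<noteq> [] \<and> (\<forall>x\<in>set c. x \<le> M) \<and> last c < M"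

definition Lw :: "nat \<Rightarrow> nat list \<Rightarrow> nat \<Rightarrow> nat \<Rightarrow> nat list" where
  "Lw M c u v = (if u = 0 then (if v = 0 then c else wplus c) else (if v = 0 then wrefl M (wplus c) else wrefl M c))"

definition pb :: "nat \<Rightarrow> (nat \<Rightarrow> nat) \<Rightarrow> nat \<Rightarrow> nat" where
  "pb s y k = (if k = 0 then s else y (k - 1))"

definition enc :: "nat \<Rightarrow> nat list \<Rightarrow> nat \<Rightarrow> (nat \<Rightarrow> nat) \<Rightarrow> nat \<Rightarrow> nat" where
  "enc M c s y = (\<lambda>i. Lw M c (pb s y (i div length c)) (y (i div length c)) ! (i mod length c))"

lemma pb_0[simp]: "pb s y 0 = s" and pb_Suc[simp]: "pb s y (Suc k) = y k"
  by (auto simp: pb_def)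

lemma bin_le: "y \<in> Omega 1 \<Longrightarrow> y k \<le> 1" by (auto simp: Omega_def)
lemma bin_cases: "y \<in> Omega 1 \<Longrightarrow> y k = 0 \<or> y k = 1" using bin_le[of y k] by auto

lemma pb_le: "s \<le> 1 \<Longrightarrow> y \<in> Omega 1 \<Longrightarrow> pb s y k \<le> 1"
  by (cases k) (auto simp: Omega_def)

context
  fixes M :: nat and c :: "nat list"
  assumes ok: "okw M c"
begin

lemma c_ne: "c \<noteq> []" using ok by (simp add: okw_def)
lemma m_pos: "0 < length c" using c_ne by simp

lemma Lw_len[simp]: "length (Lw M c u v) = length c"
  using c_ne by (simp add: Lw_def)

lemma c_le: "\<forall>x\<in>set c. x \<le> M" using ok by (simp add: okw_def)
lemma cp_le: "\<forall>x\<in>set (wplus c). x \<le> M" using ok wplus_last_ok[of c M] by (simp add: okw_def)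

lemma Lw_le: "\<forall>x\<in>set (Lw M c u v). x \<le> M"
  using c_le cp_le wrefl_le by (simp add: Lw_def)

lemma Lw_refl: "u \<le> 1 \<Longrightarrow> v \<le> 1 \<Longrightarrow> wrefl M (Lw M c u v) = Lw M c (1 - u) (1 - v)"
  using wrefl_wrefl[OF c_le] wrefl_wrefl[OF cp_le] by (auto simp: Lw_def)

lemma Lw_lt: "wlt (Lw M c u 0) (Lw M c u 1)"
  using wlt_wplus[OF c_ne] wrefl_wplus_lt[OF c_ne] ok by (simp add: Lw_def okw_def)

lemma Lw_plus: "wplus (Lw M c u 0) = Lw M c u 1"
proof (cases "u = 0")
  case False
  have "wplus (wrefl M (wplus c)) = wrefl M c"
  proof (rule nth_equalityI)
    fix i assume i: "i < length (wplus (wrefl M (wplus c)))"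
    have "c ! (length c - 1) < M" using ok c_ne by (simp add: okw_def last_conv_nth)
    have ne: "wrefl M (wplus c) \<noteq> []" using c_ne by (simp add: wrefl_def wplus_def)
    have i': "i < length c" using i c_ne ne by simp
    have "wplus (wrefl M (wplus c)) ! i = (if i = length c - 1 then M - wplus c ! i + 1 else M - wplus c ! i)"
      using i' c_ne ne by (subst wplus_nth) auto
    also have "\<dots> = M - c ! i" using i' c_ne \<open>c ! (length c - 1) < M\<close> by (auto simp: wplus_nth)
    finally show "wplus (wrefl M (wplus c)) ! i = wrefl M c ! i" using i' by simp
  qed (use c_ne in simp)
  then show ?thesis using False by (simp add: Lw_def)
qed (simp add: Lw_def)

lemma blk_enc: "blk (length c) (enc M c s y) k = Lw M c (pb s y k) (y k)"
proof (rule nth_equalityI)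
  fix j assume "j < length (blk (length c) (enc M c s y) k)"
  then have j: "j < length c" by simp
  have d: "(k * length c + j) div length c = k" and md: "(k * length c + j) mod length c = j"
    using j by (auto simp: div_add1_eq)
  show "blk (length c) (enc M c s y) k ! j = Lw M c (pb s y k) (y k) ! j"
    using j by (simp add: blk_nth enc_def d md)
qed simp

lemma enc_Omega: "enc M c s y \<in> Omega M"
  unfolding Omega_def enc_def
proof (intro CollectI allI)
  fix i
  let ?w = "Lw M c (pb s y (i div length c)) (y (i div length c))"
  have "?w ! (i mod length c) \<in> set ?w" using m_pos by (intro nth_mem) simp
  then show "?w ! (i mod length c) \<le> M" using Lw_le by blast
qed

lemma enc_shift: "shift (k * length c) (enc M c s y) = enc M c (pb s y k) (shift k y)"
proof -
  have "pb (pb s y k) (shift k y) (i div length c) = pb s y (k + i div length c)" for i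
    by (cases "i div length c") (auto simp: pb_def shift_def add.commute)
  moreover have "(i + k * length c) div length c = k + i div length c" for i using m_pos by simp
  moreover have "(i + k * length c) mod length c = i mod length c" for i by simp
  ultimately show ?thesis unfolding enc_def shift_def by (auto simp: add.commute)
qed

lemma enc_srefl:
  assumes "y \<in> Omega 1" "s \<le> 1"
  shows "srefl M (enc M c s y) = enc M c (1 - s) (srefl 1 y)"
proof (rule blk_ext[OF m_pos])
  fix k
  have "blk (length c) (srefl M (enc M c s y)) k = wrefl M (Lw M c (pb s y k) (y k))"
    by (simp add: blk_srefl blk_enc)
  also have "\<dots> = Lw M c (1 - pb s y k) (1 - y k)"
  proof (rule Lw_refl)
    show "pb s y k \<le> 1" by (rule pb_le) (use assms in auto)
    show "y k \<le> 1" by (rule bin_le[OF assms(1)])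
  qed
  also have "\<dots> = blk (length c) (enc M c (1 - s) (srefl 1 y)) k"
    by (cases k) (auto simp: blk_enc srefl_def)
  finally show "blk (length c) (srefl M (enc M c s y)) k = blk (length c) (enc M c (1 - s) (srefl 1 y)) k" .
qed

lemma enc_mono:
  assumes y: "y \<in> Omega 1" "y' \<in> Omega 1" and lt: "lex_less y y'"
  shows "lex_less (enc M c s y) (enc M c s y')"
proof -
  obtain k where k: "\<forall>i<k. y i = y' i" "y k < y' k" using lt unfolding lex_less_def by auto
  have yk: "y k = 0" "y' k = 1" using k(2) bin_le[OF y(2), of k] by auto
  have pbk: "pb s y k = pb s y' k" using k(1) by (cases k) auto
  show ?thesis
  proof (rule blk_lt[OF m_pos, of k])
    show "\<forall>t<k. blk (length c) (enc M c s y) t = blk (length c) (enc M c s y') t"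
      using k(1) by (auto simp: blk_enc pb_def)
    show "wlt (blk (length c) (enc M c s y) k) (blk (length c) (enc M c s y') k)"
      using Lw_lt yk pbk by (simp add: blk_enc)
  qed
qed

lemma enc_le_iff:
  assumes y: "y \<in> Omega 1" "y' \<in> Omega 1"
  shows "lex_le (enc M c s y) (enc M c s y') \<longleftrightarrow> lex_le y y'"
  using enc_mono[OF y] enc_mono[OF y(2,1)] lex_not_le lex_le_def by metis

lemma enc_less_iff:
  assumes y: "y \<in> Omega 1" "y' \<in> Omega 1"
  shows "lex_less (enc M c s y) (enc M c s y') \<longleftrightarrow> lex_less y y'"
  using enc_le_iff[OF y(2,1)] lex_not_le by metis

lemma enc_inj:
  assumes y: "y \<in> Omega 1" "y' \<in> Omega 1" and e: "enc M c s y = enc M c s y'"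
  shows "y = y'"
  using enc_le_iff[OF y, of s] enc_le_iff[OF y(2,1), of s] e lex_le_antisym by auto

end


definition ebit :: "edge \<Rightarrow> nat" where
  "ebit e = (case e of E0 \<Rightarrow> 1 | E3 \<Rightarrow> 1 | E4 \<Rightarrow> 1 | _ \<Rightarrow> 0)"

definition ed :: "nat \<Rightarrow> nat \<Rightarrow> edge" where
  "ed u v = (if u = 0 then (if v = 0 then E2 else E3) else (if v = 0 then E1 else E4))"

definition pth :: "(nat \<Rightarrow> nat) \<Rightarrow> nat \<Rightarrow> edge" where
  "pth y k = (if k = 0 then E0 else ed (y (k - 1)) (y k))"

lemma ebit_simps[simp]: "ebit E0 = 1" "ebit E1 = 0" "ebit E2 = 0" "ebit E3 = 1" "ebit E4 = 1"
  by (auto simp: ebit_def)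

lemma labstar_bit: "labstar e = [ebit e]" by (cases e) (auto simp: ebit_def)

lemma lab_Lw: "lab M c e = Lw M c (if src e = VA then 1 else 0) (ebit e)"
  by (cases e) (auto simp: ebit_def Lw_def)

lemma tgt_bit: "(if tgt e = VA then 1 else 0) = ebit e"
  by (cases e) (auto simp: ebit_def)

lemma tgt_not_Start: "tgt e \<noteq> Start" by (cases e) auto

lemma ebit_le: "ebit e \<le> 1" by (cases e) (auto simp: ebit_def)

lemma edge_det: "src e \<noteq> Start \<Longrightarrow> e = ed (if src e = VA then 1 else 0) (ebit e)"
  by (cases e) (auto simp: ebit_def ed_def)

lemma ebit_ed: "v \<le> 1 \<Longrightarrow> ebit (ed u v) = v" by (auto simp: ebit_def ed_def)
lemma src_ed: "src (ed u v) = (if u = 0 then VB else VA)" by (auto simp: ed_def)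
lemma tgt_ed: "tgt (ed u v) = (if v = 0 then VB else VA)" by (auto simp: ed_def)

lemma concat_uniform:
  assumes "\<forall>w\<in>set ws. length w = m" "i < length ws * m"
  shows "concat ws ! i = ws ! (i div m) ! (i mod m)"
  using assms
proof (induction ws arbitrary: i)
  case (Cons w ws)
  have lw: "length w = m" using Cons.prems by auto
  show ?case
  proof (cases "i < m")
    case True then show ?thesis using lw by (simp add: nth_append)
  next
    case False
    then have ih: "concat ws ! (i - m) = ws ! ((i - m) div m) ! ((i - m) mod m)"
      using Cons by auto
    have m0: "0 < m" using Cons.prems(2) by (cases m) auto
    have "(i - m) div m = i div m - 1" "(i - m) mod m = i mod m" "i div m \<noteq> 0"
      using False m0 by (auto simp: le_div_geq le_mod_geq)
    with ih show ?thesis using False lw by (simp add: nth_append nth_Cons')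
  qed
qed simp

lemma length_concat_uniform: "\<forall>w\<in>set ws. length w = m \<Longrightarrow> length (concat ws) = length ws * m"
  by (induction ws) auto

lemma concat_inf_uniform:
  assumes "\<And>k. length (w k) = m" "0 < m"
  shows "concat_inf w n = w (n div m) ! (n mod m)"
proof -
  have "Suc n \<le> Suc n * m" using assms(2) by (cases m) auto
  then have "n < length (map w [0..<Suc n]) * m" by simp
  then have "concat (map w [0..<Suc n]) ! n = map w [0..<Suc n] ! (n div m) ! (n mod m)"
    using assms(1) by (intro concat_uniform) auto
  moreover have "n div m < Suc n" by (simp add: le_imp_less_Suc div_le_dividend)
  ultimately show ?thesis unfolding concat_inf_def by (simp del: upt_Suc)
qed

lemma ipath_pb: "ipath p \<Longrightarrow> (if src (p k) = VA then 1 else 0) = pb 0 (ebit \<circ> p) k"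
  by (cases k) (auto simp: ipath_def tgt_bit[symmetric])

lemma ipath_enc:
  assumes "ipath p" "c \<noteq> []"
  shows "concat_inf (lab M c \<circ> p) = enc M c 0 (ebit \<circ> p)"
proof
  fix n
  have "concat_inf (lab M c \<circ> p) n = lab M c (p (n div length c)) ! (n mod length c)"
    using assms(2) by (subst concat_inf_uniform[of _ "length c"]) (auto simp: lab_Lw Lw_def)
  also have "\<dots> = enc M c 0 (ebit \<circ> p) n"
    unfolding enc_def lab_Lw ipath_pb[OF assms(1)] by simp
  finally show "concat_inf (lab M c \<circ> p) n = enc M c 0 (ebit \<circ> p) n" .
qed

lemma ipath_star: "concat_inf (labstar \<circ> p) = ebit \<circ> p"
  by (rule ext, subst concat_inf_uniform[of _ 1]) (auto simp: labstar_bit)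

lemma ipath_bits: "ipath p \<Longrightarrow> ebit \<circ> p \<in> Omega 1 \<and> (ebit \<circ> p) 0 = 1"
proof -
  assume "ipath p"
  moreover have "ebit \<circ> p \<in> Omega 1" using ebit_le by (auto simp: Omega_def)
  ultimately show ?thesis by (auto simp: ipath_def)
qed

lemma pth_ipath: "y \<in> Omega 1 \<Longrightarrow> y 0 = 1 \<Longrightarrow> ipath (pth y)"
  unfolding ipath_def
proof (intro conjI allI)
  fix n assume y: "y \<in> Omega 1" "y 0 = 1"
  show "tgt (pth y n) = src (pth y (Suc n))"
    using y bin_cases[OF y(1), of n] by (cases n) (auto simp: pth_def tgt_ed src_ed)
qed (simp add: pth_def)

lemma pth_bits: assumes "y \<in> Omega 1" "y 0 = 1" shows "ebit \<circ> pth y = y"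
proof
  fix k show "(ebit \<circ> pth y) k = y k"
    using assms ebit_ed[OF bin_le[OF assms(1)]] by (cases k) (auto simp: pth_def ebit_def)
qed

lemma X_eq: "c \<noteq> [] \<Longrightarrow> X M c = {enc M c 0 y | y. y \<in> Omega 1 \<and> y 0 = 1}"
  unfolding X_def
proof (safe)
  fix p assume "c \<noteq> []" "ipath p"
  then show "\<exists>y. concat_inf (lab M c \<circ> p) = enc M c 0 y \<and> y \<in> Omega 1 \<and> y 0 = 1"
    using ipath_enc ipath_bits by blast
next
  fix y assume "c \<noteq> []" "y \<in> Omega 1" "y 0 = 1"
  then show "\<exists>p. enc M c 0 y = concat_inf (lab M c \<circ> p) \<and> ipath p"
    using ipath_enc[OF pth_ipath] pth_bits by (metis pth_ipath)
qed

lemma Phi_eq: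
  assumes ok: "okw M c" and y: "y \<in> Omega 1" "y 0 = 1"
  shows "Phi M c (enc M c 0 y) = y"
  unfolding Phi_def
proof (rule the_equality)
  have c: "c \<noteq> []" using ok by (simp add: okw_def)
  show "\<exists>p. ipath p \<and> enc M c 0 y = concat_inf (lab M c \<circ> p) \<and> y = concat_inf (labstar \<circ> p)"
    using pth_ipath[OF y] ipath_enc[OF _ c] pth_bits[OF y] ipath_star by metis
  fix y' assume "\<exists>p. ipath p \<and> enc M c 0 y = concat_inf (lab M c \<circ> p) \<and> y' = concat_inf (labstar \<circ> p)"
  then obtain p where p: "ipath p" "enc M c 0 y = enc M c 0 (ebit \<circ> p)" "y' = ebit \<circ> p"
    using ipath_enc[OF _ c] ipath_star by metis
  have bits: "ebit \<circ> p \<in> Omega 1" using ipath_bits[OF p(1)] by simp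
  have "y = ebit \<circ> p" by (rule enc_inj[OF ok y(1) bits p(2)])
  then show "y' = y" using p(3) by simp
qed

lemma X_mem: "c \<noteq> [] \<Longrightarrow> y \<in> Omega 1 \<Longrightarrow> y 0 = 1 \<Longrightarrow> enc M c 0 y \<in> X M c"
  by (auto simp: X_eq)

lemma Phi_inj_on: "okw M c \<Longrightarrow> inj_on (Phi M c) (X M c)"
  by (auto simp: inj_on_def X_eq okw_def Phi_eq)

lemma inv_Phi:
  assumes "okw M c" "y \<in> Omega 1" "y 0 = 1"
  shows "inv_into (X M c) (Phi M c) y = enc M c 0 y"
proof -
  have "enc M c 0 y \<in> X M c" using assms by (intro X_mem) (auto simp: okw_def)
  then show ?thesis using inv_into_f_f[OF Phi_inj_on[OF assms(1)]] Phi_eq[OF assms] by metis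
qed


lemma concat_labstar: "concat (map labstar p) = map ebit p"
  by (induction p) (auto simp: labstar_bit)

lemma comp_char:
  assumes ok: "okw M a" and b: "b \<noteq> []" and Y: "Y \<in> Omega 1" "\<forall>j<length b. Y j = b ! j" "Y 0 = 1"
  shows "comp M a b = seg (enc M a 0 Y) 0 (length a * length b)"
proof -
  let ?n = "length b" and ?m = "length a"
  define p0 where "p0 = map (pth Y) [0..<?n]"
  have ip: "ipath (pth Y)" by (rule pth_ipath[OF Y(1,3)])
  have bits: "ebit \<circ> pth Y = Y" by (rule pth_bits[OF Y(1,3)])
  have fp: "fpath p0" unfolding fpath_def p0_def using b ip
    by (auto simp: ipath_def simp del: upt_Suc) (auto simp: hd_map pth_def)
  have lab0: "b = concat (map labstar p0)"
    unfolding concat_labstar p0_def using Y(2) bits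
    by (intro nth_equalityI) (auto simp: fun_eq_iff)
  have uniq: "p = p0" if p: "fpath p" "b = concat (map labstar p)" for p
  proof -
    have mb: "map ebit p = b" using p(2) by (simp add: concat_labstar)
    then have lp: "length p = ?n" by auto
    have "p ! k = pth Y k" if "k < ?n" for k
      using that
    proof (induction k)
      case 0 then show ?case using p(1) lp by (auto simp: fpath_def hd_conv_nth pth_def)
    next
      case (Suc k)
      have st: "src (p ! Suc k) = tgt (p ! k)" using p(1) Suc.prems lp by (auto simp: fpath_def)
      then have sn: "src (p ! Suc k) \<noteq> Start" using tgt_not_Start by metis
      have "(if src (p ! Suc k) = VA then 1 else 0) = Y k"
        using st Suc tgt_bit[of "pth Y k"] bits by (auto simp: fun_eq_iff)
      moreover have "ebit (p ! Suc k) = Y (Suc k)" using mb Suc.prems Y(2) lp by (metis nth_map)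
      ultimately have "p ! Suc k = ed (Y k) (Y (Suc k))" using edge_det[OF sn] by metis
      then show ?case by (simp add: pth_def)
    qed
    then show ?thesis unfolding p0_def using lp by (intro nth_equalityI) auto
  qed
  have "comp M a b = concat (map (lab M a) p0)"
    unfolding comp_def using fp lab0 uniq by (intro the_equality) auto
  also have "\<dots> = seg (enc M a 0 Y) 0 (?m * ?n)"
  proof (rule nth_equalityI)
    have len: "\<forall>w\<in>set (map (lab M a) p0). length w = ?m" using ok by (auto simp: lab_Lw okw_def)
    show "length (concat (map (lab M a) p0)) = length (seg (enc M a 0 Y) 0 (?m * ?n))"
      using length_concat_uniform[OF len] by (simp add: p0_def)
    fix i assume "i < length (concat (map (lab M a) p0))"
    then have i: "i < ?n * ?m" using length_concat_uniform[OF len] by (simp add: p0_def)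
    have m0: "0 < ?m" using ok by (simp add: okw_def)
    have k: "i div ?m < ?n" using i m0 by (simp add: div_less_iff_less_mult mult.commute)
    have "concat (map (lab M a) p0) ! i = map (lab M a) p0 ! (i div ?m) ! (i mod ?m)"
      using concat_uniform[OF len] i by (simp add: p0_def)
    also have "\<dots> = lab M a (pth Y (i div ?m)) ! (i mod ?m)" using k by (simp add: p0_def)
    also have "\<dots> = enc M a 0 Y i"
      unfolding enc_def lab_Lw ipath_pb[OF ip] bits using fun_cong[OF bits] by simp
    finally show "concat (map (lab M a) p0) ! i = seg (enc M a 0 Y) 0 (?m * ?n) ! i"
      using i by (simp add: mult.commute)
  qed
  finally show ?thesis .
qed


abbreviation zeros :: "nat \<Rightarrow> nat" where "zeros \<equiv> (\<lambda>_. 0)"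
abbreviation ones :: "nat \<Rightarrow> nat" where "ones \<equiv> (\<lambda>_. 1)"

lemma zeros_Omega[simp]: "zeros \<in> Omega M" and ones_Omega[simp]: "ones \<in> Omega 1"
  by (auto simp: Omega_def)

lemma srefl_bin_Omega: "srefl 1 z \<in> Omega 1" by (rule srefl_Omega)

context
  fixes M :: nat and a b :: "nat list"
  assumes oka: "okw M a" and okb: "okw 1 b" and b0: "b ! 0 = 1"
begin

lemma a_ne: "a \<noteq> []" and b_ne: "b \<noteq> []" using oka okb by (auto simp: okw_def)
lemma m_pos': "0 < length a" and n_pos: "0 < length b" using a_ne b_ne by auto

lemma add_m1: "x + length a - 1 = x + (length a - 1)" using m_pos' by arith
lemma add_n1: "x + length b - 1 = x + (length b - 1)" using n_pos by arith

lemma b_last: "b ! (length b - 1) = 0"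
  using okb b_ne by (simp add: okw_def last_conv_nth)

lemma lastbit: "u \<le> 1 \<Longrightarrow> v \<le> 1 \<Longrightarrow> Lw 1 b u v ! (length b - 1) = v"
  using b_last b_ne by (auto simp: Lw_def wplus_nth)

lemma encb_agree: "z \<in> Omega 1 \<Longrightarrow> z 0 = 0 \<Longrightarrow> \<forall>j<length b. enc 1 b 0 z j = b ! j"
proof (intro allI impI)
  fix j assume "z \<in> Omega 1" "z 0 = 0" "j < length b"
  then have "blk (length b) (enc 1 b 0 z) 0 = b" using blk_enc[OF okb, of 0 z 0] by (simp add: Lw_def)
  moreover have "blk (length b) (enc 1 b 0 z) 0 ! j = enc 1 b 0 z j" using \<open>j < length b\<close> by (simp add: blk_nth)
  ultimately show "enc 1 b 0 z j = b ! j" by simp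
qed

lemma ab_seg:
  assumes "Y \<in> Omega 1" "\<forall>j<length b. Y j = b ! j"
  shows "comp M a b = seg (enc M a 0 Y) 0 (length a * length b)"
  using comp_char[OF oka b_ne assms] assms b0 n_pos by auto

definition Y0 where "Y0 = enc 1 b 0 zeros"

lemma Y0: "Y0 \<in> Omega 1" "\<forall>j<length b. Y0 j = b ! j"
  unfolding Y0_def using enc_Omega[OF okb] encb_agree by auto

lemma ab_len: "length (comp M a b) = length a * length b"
  using ab_seg[OF Y0] by simp

lemma ab_ok: "okw M (comp M a b)"
proof -
  let ?ab = "comp M a b" and ?m = "length a" and ?n = "length b"
  have ne: "?ab \<noteq> []" using ab_len m_pos' n_pos by auto
  have le: "\<forall>x\<in>set ?ab. x \<le> M" using ab_seg[OF Y0] enc_Omega[OF oka]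
    by (auto simp: seg_def Omega_def)
  have lt: "?m * ?n - 1 < ?m * ?n" using m_pos' n_pos by simp
  have "last ?ab = enc M a 0 Y0 (?m * ?n - 1)"
    using ab_seg[OF Y0] ne lt by (simp add: last_conv_nth del: One_nat_def)
  also have "?m * ?n - 1 = (?n - 1) * ?m + (?m - 1)" using m_pos' n_pos
    by (cases ?n; cases ?m) (auto simp: algebra_simps)
  also have "enc M a 0 Y0 \<dots> = Lw M a (pb 0 Y0 (?n - 1)) (Y0 (?n - 1)) ! (?m - 1)"
  proof -
    have "?m - 1 < ?m" using m_pos' by simp
    from blk_nth[OF this, of "enc M a 0 Y0" "?n - 1"]
    have "blk ?m (enc M a 0 Y0) (?n - 1) ! (?m - 1) = enc M a 0 Y0 ((?n - 1) * ?m + (?m - 1))" .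
    then show ?thesis using blk_enc[OF oka, of 0 Y0 "?n - 1"] by simp
  qed
  also have "Y0 (?n - 1) = 0" using Y0(2) b_last n_pos by simp
  finally have "last ?ab = Lw M a (pb 0 Y0 (?n - 1)) 0 ! (?m - 1)" .
  moreover have "a ! (?m - 1) < M" using oka a_ne by (simp add: okw_def last_conv_nth)
  ultimately have "last ?ab < M" using m_pos' by (auto simp: Lw_def wplus_nth)
  then show ?thesis using ne le by (simp add: okw_def)
qed

lemma ab0: "a ! 0 \<ge> 1 \<Longrightarrow> comp M a b ! 0 \<ge> 1"
proof -
  assume a0: "a ! 0 \<ge> 1"
  have "comp M a b ! 0 = enc M a 0 Y0 0" using ab_seg[OF Y0] m_pos' n_pos by simp
  also have "\<dots> = wplus a ! 0" using Y0 n_pos b0 by (simp add: enc_def Lw_def)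
  finally show ?thesis using a0 a_ne by (auto simp: wplus_nth)
qed

lemma G0:
  assumes z: "z \<in> Omega 1"
  shows "seg (enc M a 0 (enc 1 b 0 z)) 0 (length a * length b) = Lw M (comp M a b) 0 (z 0)"
proof (cases "z 0 = 0")
  case True
  then show ?thesis using ab_seg[OF enc_Omega[OF okb] encb_agree[OF z True]] by (simp add: Lw_def)
next
  case False
  then have z0: "z 0 = 1" using bin_cases[OF z, of 0] by auto
  let ?m = "length a" and ?n = "length b"
  define Y1 where "Y1 = enc 1 b 0 z"
  define Y0' where "Y0' = Y1 (?n - 1 := 0)"
  have Y1b: "blk ?n Y1 0 = wplus b" unfolding Y1_def using blk_enc[OF okb, of 0 z 0] z0 by (simp add: Lw_def)
  have Y1j: "j < ?n \<Longrightarrow> Y1 j = wplus b ! j" for j using Y1b blk_nth[of j ?n Y1 0] by simp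
  have Y1O: "Y1 \<in> Omega 1" unfolding Y1_def by (rule enc_Omega[OF okb])
  have Y0'O: "Y0' \<in> Omega 1" using Y1O by (auto simp: Y0'_def Omega_def)
  have Y0'b: "\<forall>j<?n. Y0' j = b ! j"
    using Y1j b_last b_ne by (auto simp: Y0'_def wplus_nth)
  have ab: "comp M a b = seg (enc M a 0 Y0') 0 (?m * ?n)" by (rule ab_seg[OF Y0'O Y0'b])
  have split: "?m * ?n = (?n - 1) * ?m + ?m" using n_pos by (cases ?n) (auto simp: algebra_simps)
  have e1: "seg (enc M a 0 Y1) 0 ((?n - 1) * ?m) = seg (enc M a 0 Y0') 0 ((?n - 1) * ?m)"
  proof (rule nth_equalityI)
    fix i assume "i < length (seg (enc M a 0 Y1) 0 ((?n - 1) * ?m))"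
    then have i: "i < (?n - 1) * ?m" by simp
    then have "i div ?m < ?n - 1" using m_pos' by (simp add: div_less_iff_less_mult)
    then have k1: "i div ?m \<noteq> ?n - 1" "i div ?m - 1 \<noteq> ?n - 1" by auto
    have "Y0' (i div ?m) = Y1 (i div ?m)" using k1(1) by (simp add: Y0'_def)
    moreover have "pb 0 Y0' (i div ?m) = pb 0 Y1 (i div ?m)"
    proof (cases "i div ?m = 0")
      case False
      then show ?thesis using k1(2) by (simp add: pb_def Y0'_def)
    qed (simp add: pb_def)
    ultimately show "seg (enc M a 0 Y1) 0 ((?n - 1) * ?m) ! i = seg (enc M a 0 Y0') 0 ((?n - 1) * ?m) ! i"
      using i by (simp add: enc_def)
  qed simp
  have e2: "seg (enc M a 0 Y1) ((?n - 1) * ?m) ?m = wplus (seg (enc M a 0 Y0') ((?n - 1) * ?m) ?m)"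
  proof -
    have "seg (enc M a 0 Y1) ((?n - 1) * ?m) ?m = Lw M a (pb 0 Y1 (?n - 1)) (Y1 (?n - 1))"
      using blk_enc[OF oka] by (simp add: blk_def)
    moreover have "seg (enc M a 0 Y0') ((?n - 1) * ?m) ?m = Lw M a (pb 0 Y0' (?n - 1)) (Y0' (?n - 1))"
      using blk_enc[OF oka] by (simp add: blk_def)
    moreover have "pb 0 Y1 (?n - 1) = pb 0 Y0' (?n - 1)"
    proof (cases "?n - 1 = 0")
      case False
      then have "?n - 1 - 1 \<noteq> ?n - 1" by arith
      then show ?thesis using False by (simp add: pb_def Y0'_def)
    qed (simp add: pb_def)
    moreover have "Y1 (?n - 1) = 1" using Y1j[of "?n - 1"] n_pos b_last b_ne by (simp add: wplus_nth)
    moreover have "Y0' (?n - 1) = 0" by (simp add: Y0'_def)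
    ultimately show ?thesis using Lw_plus[OF oka] by simp
  qed
  have "seg (enc M a 0 Y1) 0 (?m * ?n) = seg (enc M a 0 Y1) 0 ((?n - 1) * ?m) @ seg (enc M a 0 Y1) ((?n - 1) * ?m) ?m"
    unfolding split by (simp add: seg_append)
  also have "\<dots> = wplus (seg (enc M a 0 Y0') 0 ((?n - 1) * ?m) @ seg (enc M a 0 Y0') ((?n - 1) * ?m) ?m)"
    using e1 e2 m_pos' by (simp add: wplus_append)
  also have "\<dots> = wplus (comp M a b)" unfolding ab split by (simp add: seg_append)
  finally show ?thesis using z0 by (simp add: Y1_def Lw_def)
qed

lemma G:
  assumes z: "z \<in> Omega 1" and u: "u \<le> 1"
  shows "seg (enc M a u (enc 1 b u z)) 0 (length a * length b) = Lw M (comp M a b) u (z 0)"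
proof (cases "u = 0")
  case True then show ?thesis using G0[OF z] by simp
next
  case False
  then have u1: "u = 1" using u by auto
  define w where "w = enc 1 b 0 (srefl 1 z)"
  have wO: "w \<in> Omega 1" unfolding w_def by (rule enc_Omega[OF okb])
  have "srefl 1 (enc 1 b 0 (srefl 1 z)) = enc 1 b (1 - 0) (srefl 1 (srefl 1 z))"
    by (rule enc_srefl[OF okb srefl_Omega]) simp
  then have sw: "srefl 1 w = enc 1 b 1 z"
    unfolding w_def using srefl_srefl[OF z] by simp
  have "enc M a 1 (enc 1 b 1 z) = srefl M (enc M a 0 w)"
    using enc_srefl[OF oka wO, of 0] sw by simp
  then have "seg (enc M a u (enc 1 b u z)) 0 (length a * length b) = wrefl M (Lw M (comp M a b) 0 (srefl 1 z 0))"
    using G0[OF srefl_Omega[of 1 z]] u1 by (simp add: seg_srefl w_def)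
  also have "\<dots> = Lw M (comp M a b) 1 (z 0)"
    using bin_cases[OF z, of 0] by (auto simp: srefl_def Lw_def)
  finally show ?thesis using u1 by simp
qed

lemma compose:
  assumes z: "z \<in> Omega 1"
  shows "enc M (comp M a b) 0 z = enc M a 0 (enc 1 b 0 z)"
proof -
  let ?m = "length a" and ?n = "length b" and ?ab = "comp M a b"
  have L: "length ?ab = ?m * ?n" by (rule ab_len)
  show ?thesis
  proof (rule blk_ext[of "?m * ?n"])
    show "0 < ?m * ?n" using m_pos' n_pos by simp
    fix K
    have lhs: "blk (?m * ?n) (enc M ?ab 0 z) K = Lw M ?ab (pb 0 z K) (z K)"
      using blk_enc[OF ab_ok, of 0 z K] L by simp
    define Y where "Y = enc 1 b 0 z"
    have pbY: "pb 0 Y (K * ?n) = pb 0 z K"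
    proof (cases K)
      case (Suc K')
      have "K * ?n - 1 = K' * ?n + (?n - 1)" using n_pos Suc by (cases ?n) (auto simp: algebra_simps)
      moreover have "?n - 1 < ?n" using n_pos by simp
      ultimately have "Y (K * ?n - 1) = blk ?n Y K' ! (?n - 1)"
        using blk_nth[of "?n - 1" ?n Y K'] by simp
      also have "\<dots> = z K'" unfolding Y_def blk_enc[OF okb]
        by (rule lastbit) (use pb_le[of 0 z K'] bin_le[OF z, of K'] z in auto)
      finally show ?thesis using Suc n_pos by (simp add: pb_def)
    qed (simp add: pb_def)
    have "blk (?m * ?n) (enc M a 0 Y) K = seg (shift ((K * ?n) * ?m) (enc M a 0 Y)) 0 (?m * ?n)"
      by (simp add: blk_def seg_shift algebra_simps)
    also have "\<dots> = seg (enc M a (pb 0 Y (K * ?n)) (shift (K * ?n) Y)) 0 (?m * ?n)"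
      by (simp add: enc_shift[OF oka])
    also have "shift (K * ?n) Y = enc 1 b (pb 0 z K) (shift K z)"
      unfolding Y_def by (rule enc_shift[OF okb])
    also have "seg (enc M a (pb 0 Y (K * ?n)) (enc 1 b (pb 0 z K) (shift K z))) 0 (?m * ?n) = Lw M ?ab (pb 0 z K) (shift K z 0)"
      unfolding pbY by (rule G[OF shift_Omega[OF z]]) (use pb_le[of 0 z K] z in auto)
    finally show "blk (?m * ?n) (enc M ?ab 0 z) K = blk (?m * ?n) (enc M a 0 (enc 1 b 0 z)) K"
      using lhs by (simp add: Y_def shift_def)
  qed
qed

end


definition fw :: "nat \<Rightarrow> nat list \<Rightarrow> bool" where
  "fw M c \<longleftrightarrow> okw M c \<and> 1 \<le> c ! 0 \<and> wlt (wrefl M c) (wplus c) \<and>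
     (\<forall>i. 0 < i \<and> i < length c \<longrightarrow> wlt (drop i c) (take (length c - i) c) \<and>
          wle' (wrefl M (take (length c - i) c)) (drop i c))"

lemma drop_last1: "c \<noteq> [] \<Longrightarrow> drop (length c - 1) c = [c ! (length c - 1)]"
  by (metis One_nat_def append_butlast_last_id append_eq_conv_conj last_conv_nth length_butlast)

lemma take_1: "c \<noteq> [] \<Longrightarrow> take 1 c = [c ! 0]"
  by (cases c) auto

lemma wlt_single: "wlt [x] [y] \<longleftrightarrow> x < y" by (auto simp: wlt_def)

lemma Fund_fw:
  assumes M: "M \<ge> 1" and c: "c \<in> Fund M"
  shows "fw M c"
proof -
  have le: "\<forall>x\<in>set c. x \<le> M" using c by (auto simp: Fund_def)
  let ?m = "length c"
  from c consider
    (A) "?m \<ge> 2" "\<forall>i. 1 \<le> i \<and> i < ?m \<longrightarrow> wle (wrefl M (take (?m - i) c)) (drop i c) \<and> wless (drop i c) (take (?m - i) c)"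
  | (B) "M \<ge> 2" "?m = 1" "M - hd c \<le> hd c" "hd c < M"
    unfolding Fund_def by blast
  then show ?thesis
  proof cases
    case A
    have cond: "wle' (wrefl M (take (?m - i) c)) (drop i c) \<and> wlt (drop i c) (take (?m - i) c)"
      if "0 < i" "i < ?m" for i
      using A(2)[rule_format, of i] that wle_iff[of "wrefl M (take (?m - i) c)" "drop i c"]
        wless_iff[of "drop i c" "take (?m - i) c"] by auto
    have ne: "c \<noteq> []" using A by auto
    have c1: "?m - (?m - 1) = 1" using A by auto
    have X: "wle' [M - c ! 0] [c ! (?m - 1)] \<and> wlt [c ! (?m - 1)] [c ! 0]"
      using cond[of "?m - 1"] A ne c1 drop_last1[OF ne] take_1[OF ne] by (simp add: wrefl_def)
    then have x1: "c ! (?m - 1) < c ! 0" "M - c ! 0 \<le> c ! (?m - 1)" by (auto simp: wlt_single)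
    have c0M: "c ! 0 \<le> M" using le ne by (auto simp: nth_mem)
    have "c ! (?m - 1) < M" using x1(1) c0M by linarith
    then have ok: "okw M c" using ne le by (auto simp: okw_def last_conv_nth)
    have "wlt (wrefl M c) (wplus c)" unfolding wlt_def using ne A x1
      by (intro exI[of _ 0]) (auto simp: wplus_nth)
    then show ?thesis using ok x1 cond unfolding fw_def by auto
  next
    case B
    then obtain x where cx: "c = [x]" by (cases c) auto
    have "okw M c" using B cx by (auto simp: okw_def)
    moreover have "wlt (wrefl M c) (wplus c)" using B cx by (auto simp: wlt_def wplus_def wrefl_def)
    ultimately show ?thesis using B cx unfolding fw_def by auto
  qed
qed

lemma Fund1:
  assumes "b \<in> Fund 1"
  shows "fw 1 b" "b ! 0 = 1"
proof -
  show f: "fw 1 b" using Fund_fw[OF _ assms] by simp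
  then have "b ! 0 \<le> 1" "1 \<le> b ! 0" unfolding fw_def okw_def by (auto simp: nth_mem)
  then show "b ! 0 = 1" by simp
qed

lemma drop_seg: "i \<le> l \<Longrightarrow> drop i (seg x p l) = seg x (p + i) (l - i)"
  by (rule nth_equalityI) (auto simp: add.assoc)

lemma take_seg: "i \<le> l \<Longrightarrow> take i (seg x p l) = seg x p i"
  by (rule nth_equalityI) auto

context
  fixes M :: nat and c :: "nat list"
  assumes fwc: "fw M c"
begin

lemma okc: "okw M c" using fwc by (simp add: fw_def)
lemmas Lw_len'[simp] = Lw_len[OF okc]
lemma cne: "c \<noteq> []" using okc by (simp add: okw_def)
lemma clast: "last c < M" using okc by (simp add: okw_def)
lemma cle: "\<forall>x\<in>set c. x \<le> M" using okc by (simp add: okw_def)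
lemma fw_i: "0 < i \<Longrightarrow> i < length c \<Longrightarrow> wlt (drop i c) (take (length c - i) c) \<and>
          wle' (wrefl M (take (length c - i) c)) (drop i c)"
  using fwc by (simp add: fw_def)
lemma refl_lt_plus: "wlt (wrefl M c) (wplus c)" using fwc by (simp add: fw_def)
lemma c0: "1 \<le> c ! 0" using fwc by (simp add: fw_def)

lemma LwA_lt: "wlt (Lw M c 1 v) (wplus c)"
proof -
  have "wlt (wrefl M (wplus c)) (wplus c)"
    using wlt_trans[OF _ wrefl_wplus_lt[OF cne clast] refl_lt_plus] cne by simp
  then show ?thesis using refl_lt_plus by (simp add: Lw_def)
qed

lemma R4w:
  assumes i: "0 < i" "i < length c" and v: "v \<le> 1"
  shows "wlt (drop i (Lw M c u v) @ take i (Lw M c v v')) (wplus c)"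
proof -
  let ?m = "length c"
  have wp: "wplus c = take (?m - i) c @ wplus (drop (?m - i) c)"
  proof -
    have "wplus c = take (?m - i) (wplus c) @ drop (?m - i) (wplus c)" by simp
    also have "\<dots> = take (?m - i) c @ wplus (drop (?m - i) c)"
      using i by (simp add: take_wplus drop_wplus)
    finally show ?thesis .
  qed
  have dne: "drop (?m - i) c \<noteq> []" using i by simp
  have mi: "0 < ?m - i" "?m - i < ?m" "?m - (?m - i) = i" using i by auto
  have cont: "wlt (take i (Lw M c 1 v')) (wplus (drop (?m - i) c))"
  proof -
    have "take i (Lw M c 1 v') = wrefl M (take i c)"
      using i cne by (auto simp: Lw_def wrefl_take[symmetric] take_wplus)
    moreover have "wle' (wrefl M (take i c)) (drop (?m - i) c)" using fw_i[OF mi(1,2)] mi(3) by simp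
    moreover have "wlt (drop (?m - i) c) (wplus (drop (?m - i) c))" by (rule wlt_wplus[OF dne])
    ultimately show ?thesis using wle_lt_trans[of "wrefl M (take i c)" "drop (?m - i) c"] i by simp
  qed
  have F: "wlt (drop i c) (take (?m - i) c)" "wle' (wrefl M (take (?m - i) c)) (drop i c)" using fw_i[OF i] by auto
  have len: "length (drop i (Lw M c u v)) = length (take (?m - i) c)" using i by simp
  have dle: "\<forall>x\<in>set (drop i c). x \<le> M" using cle by (auto dest: in_set_dropD)
  have tle: "\<forall>x\<in>set (take (?m - i) c). x \<le> M" using cle by (auto dest: in_set_takeD)
  have F2: "wle' (wrefl M (drop i c)) (take (?m - i) c)"
    using wle_wrefl[OF _ wrefl_le dle F(2)] wrefl_wrefl[OF tle] wrefl_wrefl[OF dle] i by auto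
  have dilast: "drop i c \<noteq> []" "last (drop i c) < M" using i clast by auto
  show ?thesis
  proof (cases "u = 0")
    case u0: True
    show ?thesis
    proof (cases "v = 0")
      case True
      then show ?thesis unfolding wp using u0 F(1) len by (subst wlt_append) (auto simp: Lw_def)
    next
      case False
      then have v1: "v = 1" using v by auto
      have "wplus (drop i c) = take (?m - i) c \<or> wlt (wplus (drop i c)) (take (?m - i) c)"
        using wlt_wplus_cases[OF _ _ F(1)] i by simp
      then show ?thesis unfolding wp using u0 v1 cont len i
        by (subst wlt_append) (auto simp: Lw_def drop_wplus)
    qed
  next
    case u1: False
    show ?thesis
    proof (cases "v = 0")
      case True
      have "wlt (wrefl M (wplus (drop i c))) (wrefl M (drop i c))" by (rule wrefl_wplus_lt[OF dilast])
      then have "wlt (wrefl M (wplus (drop i c))) (take (?m - i) c)"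
        using wlt_le_trans[OF _ _ F2] dilast(1) by simp
      then show ?thesis unfolding wp using u1 True len i
        by (subst wlt_append) (auto simp: Lw_def drop_wplus wrefl_drop[symmetric])
    next
      case False
      then have v1: "v = 1" using v by auto
      show ?thesis unfolding wp using u1 v1 cont len i F2
        by (subst wlt_append) (auto simp: Lw_def wrefl_drop[symmetric])
    qed
  qed
qed

lemma R4:
  assumes y: "y \<in> Omega 1" "y 0 = 1" and sh: "\<And>k. lex_le (shift k y) y"
  shows "lex_le (shift n (enc M c 0 y)) (enc M c 0 y)"
proof -
  let ?m = "length c" and ?x = "enc M c 0 y"
  have mpos: "0 < ?m" using cne by simp
  define k where "k = n div ?m"
  define i where "i = n mod ?m"
  have n: "n = k * ?m + i" unfolding k_def i_def by simp
  have b0: "blk ?m ?x 0 = wplus c" using blk_enc[OF okc, of 0 y 0] y by (simp add: Lw_def)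
  show ?thesis
  proof (cases "i = 0")
    case True
    then have sx: "shift n ?x = enc M c (pb 0 y k) (shift k y)" using n enc_shift[OF okc] by simp
    show ?thesis
    proof (cases "pb 0 y k = 0")
      case True
      then show ?thesis using sx enc_le_iff[OF okc shift_Omega[OF y(1)] y(1)] sh by simp
    next
      case False
      then have "pb 0 y k = 1" using pb_le[of 0 y k] y by auto
      then have "blk ?m (shift n ?x) 0 = Lw M c 1 (shift k y 0)"
        using sx blk_enc[OF okc, of 1 "shift k y" 0] by simp
      then have "wlt (blk ?m (shift n ?x) 0) (blk ?m ?x 0)" using b0 LwA_lt by simp
      then show ?thesis using blk_lt[OF mpos, of 0] lex_less_imp_le by blast
    qed
  next
    case False
    then have i: "0 < i" "i < ?m" using mpos unfolding i_def by auto
    have "seg (shift n ?x) 0 ?m = seg ?x n ?m" by (simp add: seg_shift)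
    also have "\<dots> = seg ?x n (?m - i) @ seg ?x (n + (?m - i)) i"
      using seg_append[of ?x n "?m - i" i] i by simp
    also have "seg ?x n (?m - i) = drop i (blk ?m ?x k)"
      unfolding blk_def using i by (simp add: drop_seg n)
    also have "seg ?x (n + (?m - i)) i = take i (blk ?m ?x (Suc k))"
      unfolding blk_def using i by (simp add: take_seg n algebra_simps)
    finally have sg: "seg (shift n ?x) 0 ?m = drop i (blk ?m ?x k) @ take i (blk ?m ?x (Suc k))" .
    have "wlt (seg (shift n ?x) 0 ?m) (seg ?x 0 ?m)"
      unfolding sg blk_enc[OF okc] using b0 R4w[OF i bin_le[OF y(1), of k], of "pb 0 y k" "y (Suc k)"]
      by (simp add: blk_def)
    then show ?thesis using seq_lt[of 0] lex_less_imp_le by blast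
  qed
qed

end


lemma ones_prefix_le:
  assumes y: "y \<in> Omega 1" and p: "\<forall>j<n. y j = 1"
  shows "lex_le (shift n y) y"
proof (cases "\<forall>j. y j = 1")
  case True
  then have "shift n y = y" by (auto simp: shift_def)
  then show ?thesis by simp
next
  case False
  then obtain j0 where "y j0 \<noteq> 1" by auto
  define r where "r = (LEAST j. y j \<noteq> 1)"
  have r1: "y r \<noteq> 1" unfolding r_def by (rule LeastI[of _ j0]) fact
  have r2: "\<forall>i<r. y i = 1" unfolding r_def using not_less_Least by blast
  have yr: "y r = 0" using r1 bin_cases[OF y, of r] by auto
  have rn: "n \<le> r" using p r1 by (meson not_le)
  show ?thesis
  proof (cases "n = 0")
    case True then show ?thesis by simp
  next
    case False
    show ?thesis unfolding lex_le_def lex_less_def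
    proof (intro disjI2 exI[of _ "r - n"] conjI allI impI)
      fix i assume "i < r - n"
      then show "shift n y i = y i" using r2 by (simp add: shift_def)
    next
      show "shift n y (r - n) < y (r - n)" using rn False r2 yr by (simp add: shift_def)
    qed
  qed
qed

lemma le_forces_ones:
  assumes le: "lex_le w y" and y: "y \<in> Omega 1" and w: "\<forall>j\<le>l. w j = 1"
  shows "\<forall>j\<le>l. y j = 1"
proof (rule ccontr)
  assume "\<not> (\<forall>j\<le>l. y j = 1)"
  then obtain j0 where j0: "j0 \<le> l" "y j0 \<noteq> 1" by auto
  define t where "t = (LEAST j. y j \<noteq> 1)"
  have t1: "y t \<noteq> 1" unfolding t_def by (rule LeastI[of _ j0]) (use j0 in auto)
  have t2: "\<forall>i<t. y i = 1" unfolding t_def using not_less_Least by blast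
  have tl: "t \<le> l" unfolding t_def using j0 Least_le[of "\<lambda>j. y j \<noteq> 1" j0] by auto
  have "lex_less y w" unfolding lex_less_def
    using t1 t2 tl w bin_cases[OF y, of t] by (intro exI[of _ t]) auto
  then show False using le lex_not_le by blast
qed

lemma run_start:
  fixes n :: nat and y :: "nat \<Rightarrow> nat"
  shows "\<exists>i\<le>n. (i = 0 \<or> y (i - 1) \<noteq> y n) \<and> (\<forall>j. i \<le> j \<and> j \<le> n \<longrightarrow> y j = y n)"
proof (induction n)
  case 0 then show ?case by auto
next
  case (Suc n)
  show ?case
  proof (cases "y n = y (Suc n)")
    case True
    then obtain i where "i \<le> n" "i = 0 \<or> y (i - 1) \<noteq> y n" "\<forall>j. i \<le> j \<and> j \<le> n \<longrightarrow> y j = y n"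
      using Suc by blast
    then show ?thesis using True by (intro exI[of _ i]) (auto simp: le_Suc_eq)
  next
    case False
    then show ?thesis by (intro exI[of _ "Suc n"]) auto
  qed
qed

lemma shift_srefl: "shift n (srefl M y) = srefl M (shift n y)"
  by (auto simp: shift_def srefl_def)

lemma BL_upper:
  assumes y: "y \<in> Omega 1" "y 0 = 1"
    and a: "\<And>k. y k = 0 \<Longrightarrow> lex_le (shift (Suc k) y) y"
  shows "lex_le (shift n y) y"
proof (induction n rule: less_induct)
  case (less n)
  show ?case
  proof (cases n)
    case 0 then show ?thesis by simp
  next
    case (Suc k)
    show ?thesis
    proof (cases "y k = 0")
      case True then show ?thesis using a Suc by simp
    next
      case False
      then have yk: "y k = 1" using bin_cases[OF y(1), of k] by auto
      show ?thesis
      proof (cases "y n = 0")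
        case True
        then have "lex_less (shift n y) y" unfolding lex_less_def using y
          by (intro exI[of _ 0]) (auto simp: shift_def)
        then show ?thesis by (rule lex_less_imp_le)
      next
        case False
        then have yn: "y n = 1" using bin_cases[OF y(1), of n] by auto
        obtain i where i: "i \<le> n" "i = 0 \<or> y (i - 1) \<noteq> y n" "\<forall>j. i \<le> j \<and> j \<le> n \<longrightarrow> y j = y n"
          using run_start by blast
        show ?thesis
        proof (cases "i = 0")
          case True
          have "\<forall>j<n. y j = 1" using i yn True by auto
          then show ?thesis by (rule ones_prefix_le[OF y(1)])
        next
          case False
          then have yi: "y (i - 1) = 0" using i yn bin_cases[OF y(1), of "i - 1"] by auto
          have li: "lex_le (shift i y) y" using a[OF yi] False by simp
          have "\<forall>j\<le>n - i. shift i y j = 1" using i yn by (auto simp: shift_def)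
          then have ones: "\<forall>j\<le>n - i. y j = 1" by (rule le_forces_ones[OF li y(1)])
          have agree: "\<forall>j<n - i. shift i y j = y j" using i yn ones by (auto simp: shift_def)
          have "lex_le (shift (n - i) (shift i y)) (shift (n - i) y)"
            by (rule lex_le_prefix_cancel[OF li agree])
          moreover have "shift (n - i) (shift i y) = shift n y" using i(1) by simp
          moreover have "lex_le (shift (n - i) y) y" using False i(1) by (intro less) auto
          ultimately show ?thesis by (metis lex_le_trans)
        qed
      qed
    qed
  qed
qed

lemma BL_lower:
  assumes y: "y \<in> Omega 1" "y 0 = 1"
    and a: "\<And>k. y k = 0 \<Longrightarrow> lex_le (shift (Suc k) y) y"
    and b: "\<And>k. y k = 1 \<Longrightarrow> lex_le (srefl 1 (shift (Suc k) y)) y"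
  shows "lex_le (srefl 1 y) (shift n y)"
proof -
  have up: "\<And>n. lex_le (shift n y) y" by (rule BL_upper[OF y a])
  have refl: "lex_le (srefl 1 y) w" if "w \<in> Omega 1" "lex_le (srefl 1 w) y" for w
    using lex_le_srefl[OF srefl_Omega y(1) that(2)] srefl_srefl[OF that(1)] by simp
  show ?thesis
  proof (cases n)
    case 0
    have "lex_less (srefl 1 y) y" unfolding lex_less_def using y
      by (intro exI[of _ 0]) (auto simp: srefl_def)
    then show ?thesis using 0 by (simp add: lex_less_imp_le)
  next
    case (Suc k)
    show ?thesis
    proof (cases "y k = 1")
      case True then show ?thesis using b[OF True] refl[OF shift_Omega[OF y(1)]] Suc by simp
    next
      case False
      then have yk: "y k = 0" using bin_cases[OF y(1), of k] by auto
      show ?thesis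
      proof (cases "y n = 1")
        case True
        then have "lex_less (srefl 1 y) (shift n y)" unfolding lex_less_def using y
          by (intro exI[of _ 0]) (auto simp: shift_def srefl_def)
        then show ?thesis by (rule lex_less_imp_le)
      next
        case False
        then have yn: "y n = 0" using bin_cases[OF y(1), of n] by auto
        obtain i where i: "i \<le> n" "i = 0 \<or> y (i - 1) \<noteq> y n" "\<forall>j. i \<le> j \<and> j \<le> n \<longrightarrow> y j = y n"
          using run_start by blast
        have i0: "i \<noteq> 0" using i yn y by auto
        then have yi: "y (i - 1) = 1" using i yn bin_cases[OF y(1), of "i - 1"] by auto
        have li: "lex_le (srefl 1 (shift i y)) y" using b[OF yi] i0 by simp
        have "\<forall>j\<le>n - i. srefl 1 (shift i y) j = 1" using i yn by (auto simp: shift_def srefl_def)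
        then have ones: "\<forall>j\<le>n - i. y j = 1" by (rule le_forces_ones[OF li y(1)])
        have agree: "\<forall>j<n - i. srefl 1 (shift i y) j = y j" using i yn ones by (auto simp: shift_def srefl_def)
        have "lex_le (shift (n - i) (srefl 1 (shift i y))) (shift (n - i) y)"
          by (rule lex_le_prefix_cancel[OF li agree])
        moreover have "shift (n - i) (srefl 1 (shift i y)) = srefl 1 (shift n y)"
          using i(1) by (simp add: shift_srefl)
        ultimately have "lex_le (srefl 1 (shift n y)) y" using up lex_le_trans by metis
        then show ?thesis using refl[OF shift_Omega[OF y(1)]] by simp
      qed
    qed
  qed
qed

lemma Vseq_infnz:
  assumes M: "M \<ge> 1" and d: "d \<in> Vseq M"
  shows "infnz d"
proof (rule ccontr)
  assume "\<not> infnz d"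
  then obtain N where N: "\<And>n. n \<ge> N \<Longrightarrow> d n = 0" unfolding infnz_def by auto
  have "lex_le (srefl M d) (shift N d)" using d by (auto simp: Vseq_def)
  moreover have "shift N d = (\<lambda>_. 0)" using N by (auto simp: shift_def)
  ultimately have "srefl M d = (\<lambda>_. 0)" by (auto simp: lex_le_def lex_less_def)
  then have "M - d N = 0" by (metis srefl_def)
  then show False using N[of N] M by simp
qed

lemma R3:
  assumes ok: "okw M c" and y: "y \<in> Omega 1" "y 0 = 1" and xV: "enc M c 0 y \<in> Vseq M"
  shows "y \<in> Vseq 1"
proof -
  let ?x = "enc M c 0 y" and ?m = "length c"
  have V: "lex_le (srefl M ?x) (shift n ?x)" "lex_le (shift n ?x) ?x" for n
    using xV by (auto simp: Vseq_def)
  have a: "lex_le (shift (Suc k) y) y" if "y k = 0" for k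
  proof -
    have "shift (Suc k * ?m) ?x = enc M c 0 (shift (Suc k) y)" using enc_shift[OF ok, of "Suc k" 0 y] that by simp
    then show ?thesis using V(2)[of "Suc k * ?m"] enc_le_iff[OF ok shift_Omega[OF y(1)] y(1)] by simp
  qed
  have b: "lex_le (srefl 1 (shift (Suc k) y)) y" if "y k = 1" for k
  proof -
    let ?w = "shift (Suc k) y"
    have wO: "?w \<in> Omega 1" by (rule shift_Omega[OF y(1)])
    have "shift (Suc k * ?m) ?x = enc M c 1 ?w" using enc_shift[OF ok, of "Suc k" 0 y] that by simp
    also have "enc M c 1 ?w = srefl M (enc M c 0 (srefl 1 ?w))"
    proof -
      have "srefl M (enc M c 0 (srefl 1 ?w)) = enc M c (1 - 0) (srefl 1 (srefl 1 ?w))"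
        by (rule enc_srefl[OF ok srefl_Omega]) simp
      then show ?thesis using srefl_srefl[OF wO] by simp
    qed
    finally have "lex_le (srefl M ?x) (srefl M (enc M c 0 (srefl 1 ?w)))" using V(1) by metis
    then have "lex_le (enc M c 0 (srefl 1 ?w)) ?x"
      using lex_le_srefl_iff[OF enc_Omega[OF ok] enc_Omega[OF ok]] by blast
    then show ?thesis using enc_le_iff[OF ok srefl_Omega y(1)] by simp
  qed
  show ?thesis unfolding Vseq_def
    using y BL_upper[OF y a] BL_lower[OF y a b] by auto
qed


lemma Lw_simps[simp]: "Lw M c 0 0 = c" "Lw M c 0 1 = wplus c" "Lw M c 1 0 = wrefl M (wplus c)" "Lw M c 1 1 = wrefl M c"
  "Lw M c 0 (Suc v) = wplus c" "Lw M c (Suc u) 0 = wrefl M (wplus c)" "Lw M c (Suc u) (Suc v) = wrefl M c"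
  by (auto simp: Lw_def)

context
  fixes M :: nat and c :: "nat list" and x :: "nat \<Rightarrow> nat"
  assumes fwc: "fw M c" and xV: "x \<in> Vseq M"
    and lo: "lex_less (enc M c 0 zeros) x" and hi: "lex_le x (enc M c 0 ones)"
begin

abbreviation B where "B k \<equiv> blk (length c) x k"

lemma ok2: "okw M c" using fwc by (simp add: fw_def)
lemma mpos2: "0 < length c" using ok2 by (simp add: okw_def)
lemma xO: "x \<in> Omega M" using xV by (simp add: Vseq_def)

lemma B_le: "\<forall>z\<in>set (B k). z \<le> M"
  using xO by (auto simp: blk_def seg_def Omega_def)

lemma V1: "\<forall>s<t. B (k + s) = B s \<Longrightarrow> wle' (B (k + t)) (B t)"
proof -
  assume a: "\<forall>s<t. B (k + s) = B s"
  have "lex_le (shift (k * length c) x) x" using xV by (simp add: Vseq_def)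
  from blk_le[OF mpos2 this] a show ?thesis by (simp add: blk_shift)
qed

lemma V2: "\<forall>s<t. wrefl M (B s) = B (k + s) \<Longrightarrow> wle' (wrefl M (B t)) (B (k + t))"
proof -
  assume a: "\<forall>s<t. wrefl M (B s) = B (k + s)"
  have "lex_le (srefl M x) (shift (k * length c) x)" using xV by (simp add: Vseq_def)
  from blk_le[OF mpos2 this] a show ?thesis by (simp add: blk_shift blk_srefl)
qed

lemma V3: "\<forall>s<t. B s = Lw M c (pb 0 ones s) 1 \<Longrightarrow> wle' (B t) (Lw M c (pb 0 ones t) 1)"
proof -
  assume a: "\<forall>s<t. B s = Lw M c (pb 0 ones s) 1"
  from blk_le[OF mpos2 hi] a show ?thesis by (simp add: blk_enc[OF ok2])
qed

lemma V4: "\<forall>s<t. B s = c \<Longrightarrow> wle' c (B t)"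
proof -
  assume a: "\<forall>s<t. B s = c"
  have "blk (length c) (enc M c 0 zeros) s = c" for s by (simp add: blk_enc[OF ok2] pb_def)
  with blk_le[OF mpos2 lex_less_imp_le[OF lo], of t] a show ?thesis by simp
qed

lemma c_lt: "wlt c (wplus c)" using wlt_wplus ok2 by (simp add: okw_def)
lemma cr_lt: "wlt (wrefl M (wplus c)) (wrefl M c)" using wrefl_wplus_lt ok2 by (simp add: okw_def)
lemma cne2: "c \<noteq> []" using ok2 by (simp add: okw_def)

lemma betB: "wle' c w \<Longrightarrow> wle' w (wplus c) \<Longrightarrow> length w = length c \<Longrightarrow> w = c \<or> w = wplus c"
  using wle_wplus_between cne2 by blast

lemma betA:
  assumes "wle' (wrefl M (wplus c)) w" "wle' w (wrefl M c)" "length w = length c" "\<forall>z\<in>set w. z \<le> M"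
  shows "w = wrefl M (wplus c) \<or> w = wrefl M c"
proof -
  have cl: "\<forall>z\<in>set c. z \<le> M" and cpl: "\<forall>z\<in>set (wplus c). z \<le> M"
    using ok2 cp_le[OF ok2] by (auto simp: okw_def)
  have "wle' (wrefl M w) (wrefl M (wrefl M (wplus c)))"
    by (rule wle_wrefl[OF _ wrefl_le assms(4) assms(1)]) (use assms cne2 in simp)
  then have 1: "wle' (wrefl M w) (wplus c)" using wrefl_wrefl[OF cpl] by simp
  have "wle' (wrefl M (wrefl M c)) (wrefl M w)"
    by (rule wle_wrefl[OF _ assms(4) wrefl_le assms(2)]) (use assms in simp)
  then have 2: "wle' c (wrefl M w)" using wrefl_wrefl[OF cl] by simp
  have "wrefl M w = c \<or> wrefl M w = wplus c" using betB[OF 2 1] assms by simp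
  then show ?thesis using wrefl_wrefl[OF assms(4)] by metis
qed

lemma B0: "B 0 = wplus c"
proof -
  have "wle' c (B 0)" using V4[of 0] by simp
  moreover have "wle' (B 0) (wplus c)" using V3[of 0] by simp
  ultimately have "B 0 = c \<or> B 0 = wplus c" using betB by simp
  moreover have "B 0 \<noteq> c"
  proof
    assume b0: "B 0 = c"
    have "\<exists>j. B j \<noteq> c"
    proof (rule ccontr)
      assume "\<not> (\<exists>j. B j \<noteq> c)"
      then have "x = enc M c 0 zeros"
        by (intro blk_ext[OF mpos2]) (simp add: blk_enc[OF ok2] pb_def)
      then show False using lo by simp
    qed
    then obtain j1 where "B j1 \<noteq> c" by blast
    define j where "j = (LEAST j. B j \<noteq> c)"
    have j1: "B j \<noteq> c" unfolding j_def by (rule LeastI[of _ j1]) fact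
    have j2: "\<forall>s<j. B s = c" unfolding j_def using not_less_Least by blast
    have "wle' (B (j + 0)) (B 0)" by (rule V1) simp
    then have "wle' (B j) c" using b0 by simp
    moreover have "wle' c (B j)" using V4 j2 by blast
    ultimately show False using j1 wle_antisym[of c "B j"] by auto
  qed
  ultimately show ?thesis by blast
qed

definition yR :: "nat \<Rightarrow> nat" where
  "yR = rec_nat 1 (\<lambda>k r. if r = 0 then (if B (Suc k) = wplus c then 1 else 0)
                              else (if B (Suc k) = wrefl M c then 1 else 0))"

lemma yR_0[simp]: "yR 0 = 1" by (simp add: yR_def)
lemma yR_Suc: "yR (Suc k) = (if yR k = 0 then (if B (Suc k) = wplus c then 1 else 0)
                              else (if B (Suc k) = wrefl M c then 1 else 0))"
  by (simp add: yR_def)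
lemma yR_le: "yR k \<le> 1" by (cases k) (auto simp: yR_Suc)
lemma yR_Omega: "yR \<in> Omega 1" using yR_le by (auto simp: Omega_def)

lemma Lw_refl1: "v \<le> 1 \<Longrightarrow> wrefl M (Lw M c 1 v) = Lw M c 0 (1 - v)"
  using Lw_refl[OF ok2, of 1 v] by simp

lemma stepB:
  assumes IH: "\<forall>j\<le>k. B j = Lw M c (pb 0 yR j) (yR j)" and yk: "yR k = 0"
  shows "wle' c (B (Suc k)) \<and> wle' (B (Suc k)) (wplus c)"
proof
  show "wle' (B (Suc k)) (wplus c)" using V1[of 0 "Suc k"] B0 by simp
  obtain i where i: "i \<le> k" "i = 0 \<or> yR (i - 1) \<noteq> yR k" and run: "\<forall>j. i \<le> j \<and> j \<le> k \<longrightarrow> yR j = yR k"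
    using run_start by blast
  have i0: "i \<noteq> 0" using run[rule_format, of 0] yk by auto
  have yi: "yR (i - 1) = 1" using i(2) i0 yk yR_le[of "i - 1"] by auto
  have runs: "yR j = 0" if "i \<le> j" "j \<le> k" for j using run that yk by auto
  have Bj: "B j = c" if "i < j" "j \<le> k" for j
  proof -
    have "pb 0 yR j = 0" using runs[of "j - 1"] that by (cases j) auto
    then show ?thesis using IH that runs[of j] by simp
  qed
  have Bi: "B i = wrefl M (wplus c)"
  proof -
    have "pb 0 yR i = 1" using yi i0 by (cases i) auto
    then show ?thesis using IH i(1) runs[of i] by simp
  qed
  have claim: "yR s = 1 \<and> (\<forall>s'\<le>s. wrefl M (B s') = B (i + s'))" if "s \<le> k - i" for s
    using that
  proof (induction s)
    case 0 then show ?case using B0 Bi by simp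
  next
    case (Suc s)
    then have ih: "yR s = 1" "\<forall>s'\<le>s. wrefl M (B s') = B (i + s')" by auto
    have "\<forall>s'<Suc s. wrefl M (B s') = B (i + s')" using ih(2) by auto
    then have le: "wle' (wrefl M (B (Suc s))) (B (i + Suc s))" by (rule V2)
    have "B (i + Suc s) = c" using Suc.prems i0 by (intro Bj) auto
    moreover have "B (Suc s) = Lw M c 1 (yR (Suc s))" using IH[rule_format, of "Suc s"] Suc.prems ih(1) i0 by simp
    ultimately have le2: "wle' (Lw M c 0 (1 - yR (Suc s))) c" using le Lw_refl1[OF yR_le] by simp
    have "yR (Suc s) = 1"
    proof (rule ccontr)
      assume "yR (Suc s) \<noteq> 1"
      then have "yR (Suc s) = 0" using yR_le[of "Suc s"] by auto
      then show False using le2 c_lt wlt_not_le[of c "wplus c"] cne2 by simp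
    qed
    then show ?case using ih le2 \<open>B (Suc s) = _\<close> \<open>B (i + Suc s) = c\<close> Lw_refl1[of 1]
      by (auto simp: le_Suc_eq)
  qed
  define J where "J = k - i"
  have cl: "yR J = 1" "\<forall>s'\<le>J. wrefl M (B s') = B (i + s')" using claim[of J] by (auto simp: J_def)
  have "\<forall>s'<Suc J. wrefl M (B s') = B (i + s')" using cl(2) by auto
  then have le: "wle' (wrefl M (B (Suc J))) (B (i + Suc J))" by (rule V2)
  have "i + Suc J = Suc k" using i(1) by (simp add: J_def)
  moreover have "B (Suc J) = Lw M c 1 (yR (Suc J))" using IH[rule_format, of "Suc J"] i0 i(1) cl(1) by (simp add: J_def)
  ultimately have le3: "wle' (Lw M c 0 (1 - yR (Suc J))) (B (Suc k))" using le Lw_refl1[OF yR_le] by simp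
  have "wle' c (Lw M c 0 (1 - yR (Suc J)))" using c_lt yR_le[of "Suc J"] by (cases "yR (Suc J)") auto
  then show "wle' c (B (Suc k))" using le3 wle_trans[of c] Lw_len[OF ok2] by (metis)
qed

lemma stepA:
  assumes IH: "\<forall>j\<le>k. B j = Lw M c (pb 0 yR j) (yR j)" and yk: "yR k = 1"
  shows "wle' (wrefl M (wplus c)) (B (Suc k)) \<and> wle' (B (Suc k)) (wrefl M c)"
proof
  show "wle' (wrefl M (wplus c)) (B (Suc k))" using V2[of 0 "Suc k"] B0 by simp
  obtain i where i: "i \<le> k" "i = 0 \<or> yR (i - 1) \<noteq> yR k" and run: "\<forall>j. i \<le> j \<and> j \<le> k \<longrightarrow> yR j = yR k"
    using run_start by blast
  have runs: "yR j = 1" if "i \<le> j" "j \<le> k" for j using run that yk by auto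
  have pbi: "pb 0 yR i = 0" using i(2) yk yR_le[of "i - 1"] by (cases i) auto
  have Bi: "B i = wplus c" using IH i(1) runs[of i] pbi by simp
  have Bj: "B j = wrefl M c" if "i < j" "j \<le> k" for j
  proof -
    have "pb 0 yR j = 1" using runs[of "j - 1"] that by (cases j) auto
    then show ?thesis using IH that runs[of j] by simp
  qed
  show "wle' (B (Suc k)) (wrefl M c)"
  proof (cases "i = 0")
    case True
    have "\<forall>s<Suc k. B s = Lw M c (pb 0 ones s) 1"
    proof (intro allI impI)
      fix s assume "s < Suc k"
      then show "B s = Lw M c (pb 0 ones s) 1" using Bi Bj[of s] True by (cases s) auto
    qed
    then show ?thesis using V3[of "Suc k"] by simp
  next
    case False
    then have i0: "0 < i" by simp
    have claim: "yR s = 1 \<and> (\<forall>s'\<le>s. B (i + s') = B s')" if "s \<le> k - i" for s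
      using that
    proof (induction s)
      case 0 then show ?case using B0 Bi by simp
    next
      case (Suc s)
      then have ih: "yR s = 1" "\<forall>s'\<le>s. B (i + s') = B s'" by auto
      have "\<forall>s'<Suc s. B (i + s') = B s'" using ih(2) by auto
      then have le: "wle' (B (i + Suc s)) (B (Suc s))" by (rule V1)
      have bis: "B (i + Suc s) = wrefl M c" using Suc.prems i0 by (intro Bj) auto
      have bs: "B (Suc s) = Lw M c 1 (yR (Suc s))" using IH[rule_format, of "Suc s"] Suc.prems ih(1) i0 by simp
      have "yR (Suc s) = 1"
      proof (rule ccontr)
        assume "yR (Suc s) \<noteq> 1"
        then have "yR (Suc s) = 0" using yR_le[of "Suc s"] by auto
        then show False using le bis bs cr_lt wlt_not_le[of "wrefl M (wplus c)" "wrefl M c"] cne2 by simp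
      qed
      then show ?case using ih bis bs by (auto simp: le_Suc_eq)
    qed
    define J where "J = k - i"
    have cl: "yR J = 1" "\<forall>s'\<le>J. B (i + s') = B s'" using claim[of J] by (auto simp: J_def)
    have "\<forall>s'<Suc J. B (i + s') = B s'" using cl(2) by auto
    then have le: "wle' (B (i + Suc J)) (B (Suc J))" by (rule V1)
    have "i + Suc J = Suc k" using i(1) i0 by (simp add: J_def)
    moreover have "B (Suc J) = Lw M c 1 (yR (Suc J))" using IH[rule_format, of "Suc J"] i0 i(1) cl(1) by (simp add: J_def)
    ultimately have le3: "wle' (B (Suc k)) (Lw M c 1 (yR (Suc J)))" using le by simp
    have l2: "wle' (Lw M c 1 (yR (Suc J))) (wrefl M c)" using cr_lt yR_le[of "Suc J"] by (cases "yR (Suc J)") auto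
    have "length (B (Suc k)) = length (Lw M c 1 (yR (Suc J)))" using Lw_len[OF ok2] by simp
    from wle_trans[OF this le3 l2] show ?thesis .
  qed
qed

lemma B_all: "\<forall>j\<le>k. B j = Lw M c (pb 0 yR j) (yR j)"
proof (induction k)
  case 0 then show ?case using B0 by simp
next
  case (Suc k)
  have "B (Suc k) = Lw M c (yR k) (yR (Suc k))"
  proof (cases "yR k = 0")
    case True
    then have "B (Suc k) = c \<or> B (Suc k) = wplus c" using stepB[OF Suc.IH True] betB by simp
    then show ?thesis using True c_lt by (auto simp: yR_Suc)
  next
    case False
    then have yk: "yR k = 1" using yR_le[of k] by auto
    then have "B (Suc k) = wrefl M (wplus c) \<or> B (Suc k) = wrefl M c"
      using stepA[OF Suc.IH yk] betA B_le by simp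
    then show ?thesis using yk cr_lt by (auto simp: yR_Suc)
  qed
  then show ?case using Suc.IH by (auto simp: le_Suc_eq)
qed

lemma R2_main: "x = enc M c 0 yR"
  by (rule blk_ext[OF mpos2]) (use B_all in \<open>auto simp: blk_enc[OF ok2]\<close>)

end

lemma R2:
  assumes "fw M c" "x \<in> Vseq M" "lex_less (enc M c 0 zeros) x" "lex_le x (enc M c 0 ones)"
  shows "\<exists>y. y \<in> Omega 1 \<and> y 0 = 1 \<and> x = enc M c 0 y"
  using R2_main[OF assms] yR_Omega[OF assms] yR_0[OF assms] by blast


lemma per_enc: "okw M c \<Longrightarrow> per c = enc M c 0 zeros"
  by (auto simp: per_def enc_def pb_def Lw_def fun_eq_iff)

lemma preper_enc:
  assumes ok: "okw M c"
  shows "pre_per (wplus c) (wrefl M c) = enc M c 0 ones"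
proof
  fix i
  have m: "0 < length c" using ok by (simp add: okw_def)
  show "pre_per (wplus c) (wrefl M c) i = enc M c 0 ones i"
  proof (cases "i < length c")
    case True then show ?thesis using m by (simp add: pre_per_def enc_def pb_def Lw_def)
  next
    case False
    then have "i div length c \<noteq> 0" using m by (simp add: le_div_geq)
    moreover have "(i - length c) mod length c = i mod length c" using False by (simp add: le_mod_geq)
    ultimately show ?thesis using False m by (simp add: pre_per_def enc_def pb_def Lw_def per_def)
  qed
qed

lemma sig_zeros:
  assumes fwc: "fw M c"
  shows "lex_le (shift n (enc M c 0 zeros)) (enc M c 0 zeros)"
proof -
  let ?m = "length c" and ?x = "enc M c 0 zeros"
  have ok: "okw M c" using fwc by (simp add: fw_def)
  have mpos: "0 < ?m" using ok by (simp add: okw_def)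
  have xi: "?x j = c ! (j mod ?m)" for j by (simp add: enc_def pb_def Lw_def)
  define k where "k = n div ?m"
  define i where "i = n mod ?m"
  have n: "n = k * ?m + i" unfolding k_def i_def by simp
  show ?thesis
  proof (cases "i = 0")
    case True
    have e: "shift (k * ?m) ?x = enc M c (pb 0 zeros k) (shift k zeros)" by (rule enc_shift[OF ok])
    have "pb 0 zeros k = 0" "shift k zeros = zeros" by (auto simp: pb_def shift_def)
    then have "shift n ?x = ?x" using n True e by simp
    then show ?thesis by simp
  next
    case False
    then have i: "0 < i" "i < ?m" using mpos unfolding i_def by auto
    have "seg (shift n ?x) 0 (?m - i) = drop i c"
    proof (rule nth_equalityI)
      fix j assume "j < length (seg (shift n ?x) 0 (?m - i))"
      then have j: "j < ?m - i" by simp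
      have nj: "n + j = (i + j) + k * ?m" using n by simp
      have "(n + j) mod ?m = (i + j) mod ?m" unfolding nj by (rule mod_mult_self1)
      also have "\<dots> = i + j" using j i by simp
      finally have "(n + j) mod ?m = i + j" .
      then show "seg (shift n ?x) 0 (?m - i) ! j = drop i c ! j" using j i by (simp add: shift_def xi add.commute)
    qed (use i in simp)
    moreover have "seg ?x 0 (?m - i) = take (?m - i) c"
      by (rule nth_equalityI) (use i in \<open>auto simp: xi\<close>)
    ultimately have "wlt (seg (shift n ?x) 0 (?m - i)) (seg ?x 0 (?m - i))"
      using fw_i[OF fwc i] by simp
    then show ?thesis using seq_lt[of 0] lex_less_imp_le by blast
  qed
qed

lemma infnz_zeros:
  assumes ok: "okw M c" and c0: "1 \<le> c ! 0"
  shows "infnz (enc M c 0 zeros)"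
  unfolding infnz_def
proof
  fix N
  have m: "0 < length c" using ok by (simp add: okw_def)
  have "enc M c 0 zeros (N * length c) = c ! 0" using m by (simp add: enc_def pb_def Lw_def)
  moreover have "N \<le> N * length c" using m by (cases "length c") auto
  ultimately show "\<exists>n\<ge>N. enc M c 0 zeros n \<noteq> 0" using c0 by (intro exI[of _ "N * length c"]) auto
qed

lemma infnz_ones:
  assumes ok: "okw M c"
  shows "infnz (enc M c 0 ones)"
  unfolding infnz_def
proof
  fix N
  obtain m' where m': "length c = Suc m'" using ok by (cases "length c") (auto simp: okw_def)
  have l: "c ! m' < M" using ok m' by (auto simp: okw_def last_conv_nth)
  let ?n = "m' + Suc N * Suc m'"
  have "?n div Suc m' = Suc N + m' div Suc m'" by (rule div_mult_self1) simp
  then have d: "?n div Suc m' = Suc N" by simp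
  have "?n mod Suc m' = m' mod Suc m'" by (rule mod_mult_self1)
  then have md: "?n mod Suc m' = m'" by simp
  have "enc M c 0 ones ?n = M - c ! m'" unfolding enc_def m' d md by (simp add: pb_def Lw_def m')
  moreover have "N \<le> ?n" by simp
  ultimately show "\<exists>n\<ge>N. enc M c 0 ones n \<noteq> 0" using l by (intro exI[of _ ?n]) auto
qed

lemma the_q:
  assumes M: "M \<ge> 1" and d: "d \<in> Omega M" "infnz d" and sh: "\<And>n. lex_le (shift n d) d"
  shows "1 < (THE q. 1 < q \<and> q \<le> real M + 1 \<and> alpha M q = d) \<and>
         (THE q. 1 < q \<and> q \<le> real M + 1 \<and> alpha M q = d) \<le> real M + 1 \<and>
         alpha M (THE q. 1 < q \<and> q \<le> real M + 1 \<and> alpha M q = d) = d"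
proof -
  obtain q where q: "1 < q \<and> q \<le> real M + 1 \<and> alpha M q = d" using parry_exists[OF M d sh] by blast
  have "(THE q. 1 < q \<and> q \<le> real M + 1 \<and> alpha M q = d) = q"
    by (rule the_equality) (use q alpha_inj in auto)
  then show ?thesis using q by simp
qed

lemma bin_le_ones: "y \<in> Omega 1 \<Longrightarrow> lex_le y ones"
  using lex_not_le unfolding lex_less_def by (metis bin_le not_le)

lemma enc0_first: "okw M c \<Longrightarrow> y 0 = 1 \<Longrightarrow> enc M c 0 y 0 = wplus c ! 0"
  by (auto simp: enc_def okw_def)

lemma enc1_first:
  assumes ok: "okw 1 c" "c ! 0 = 1" and y: "y \<in> Omega 1" "y 0 = 1"
  shows "enc 1 c 0 y 0 = 1"
proof -
  have "enc 1 c 0 y 0 \<le> 1" using enc_Omega[OF ok(1)] by (auto simp: Omega_def)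
  moreover have "enc 1 c 0 y 0 = wplus c ! 0" using enc0_first[of 1 c y] ok(1) y(2) by simp
  moreover have "wplus c ! 0 \<ge> c ! 0" using ok by (auto simp: okw_def wplus_nth)
  ultimately show ?thesis using ok by simp
qed

context
  fixes M :: nat and c :: "nat list"
  assumes fwc: "fw M c"
begin

lemma okM: "okw M c" using fwc by (simp add: fw_def)
lemma Mpos: "1 \<le> M" using okM by (auto simp: okw_def)

lemma qL_props: "1 < qL M c \<and> qL M c \<le> real M + 1 \<and> alpha M (qL M c) = enc M c 0 zeros"
  unfolding qL_def per_enc[OF okM]
  by (rule the_q[OF Mpos enc_Omega[OF okM] infnz_zeros[OF okM c0[OF fwc]] sig_zeros[OF fwc]])

lemma qR_props: "1 < qR M c \<and> qR M c \<le> real M + 1 \<and> alpha M (qR M c) = enc M c 0 ones"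
  unfolding qR_def preper_enc[OF okM]
proof -
  have sh: "lex_le (shift k ones) ones" for k by (simp add: shift_def)
  show "1 < (THE q. 1 < q \<and> q \<le> real M + 1 \<and> alpha M q = enc M c 0 ones) \<and>
    (THE q. 1 < q \<and> q \<le> real M + 1 \<and> alpha M q = enc M c 0 ones) \<le> real M + 1 \<and>
    alpha M (THE q. 1 < q \<and> q \<le> real M + 1 \<and> alpha M q = enc M c 0 ones) = enc M c 0 ones"
    by (rule the_q[OF Mpos enc_Omega[OF okM] infnz_ones[OF okM] R4[OF fwc ones_Omega _ sh]]) simp
qed

lemma fund_dom:
  assumes q: "q \<in> Dom M c"
  shows "\<exists>y. y \<in> Omega 1 \<and> y 0 = 1 \<and> alpha M q = enc M c 0 y \<and> y \<in> Vseq 1 \<and>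
             1 < Phihat M c q \<and> Phihat M c q \<le> 2 \<and> alpha 1 (Phihat M c q) = y"
proof -
  have qq: "qL M c < q" "q \<le> qR M c" "1 < q" "q \<le> real M + 1" "alpha M q \<in> Vseq M"
    using q by (auto simp: Dom_def Vset_def)
  note L = qL_props and R = qR_props
  have lo: "lex_less (enc M c 0 zeros) (alpha M q)"
    using alpha_strict_mono[of "qL M c" q M] L qq by auto
  have hi: "lex_le (alpha M q) (enc M c 0 ones)"
    using alpha_strict_mono[of q "qR M c" M] R qq by (cases "q = qR M c") (auto simp: lex_le_def)
  obtain y where y: "y \<in> Omega 1" "y 0 = 1" "alpha M q = enc M c 0 y"
    using R2[OF fwc qq(5) lo hi] by blast
  have yV: "y \<in> Vseq 1" using R3[OF okM y(1,2)] qq(5) y(3) by simp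
  have yi: "infnz y" by (rule Vseq_infnz[OF _ yV]) simp
  have ysh: "lex_le (shift n y) y" for n using yV by (simp add: Vseq_def)
  obtain p where p: "1 < p" "p \<le> real 1 + 1" "alpha 1 p = y"
    using parry_exists[OF _ y(1) yi ysh] by auto
  have "Phihat M c q = p" unfolding Phihat_def
  proof (rule the_equality)
    show "1 < p \<and> p \<le> 2 \<and> alpha 1 p = Phi M c (alpha M q)"
      using p y Phi_eq[OF okM y(1,2)] by simp
    fix p' assume "1 < p' \<and> p' \<le> 2 \<and> alpha 1 p' = Phi M c (alpha M q)"
    then show "p' = p" using p y Phi_eq[OF okM y(1,2)] alpha_inj[of p' 1 p] by simp
  qed
  then show ?thesis using y yV p by auto
qed

lemma Phihat_inj: "inj_on (Phihat M c) (Dom M c)"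
proof (rule inj_onI)
  fix q1 q2 assume q: "q1 \<in> Dom M c" "q2 \<in> Dom M c" "Phihat M c q1 = Phihat M c q2"
  obtain y1 where y1: "alpha M q1 = enc M c 0 y1" "alpha 1 (Phihat M c q1) = y1" using fund_dom[OF q(1)] by blast
  obtain y2 where y2: "alpha M q2 = enc M c 0 y2" "alpha 1 (Phihat M c q2) = y2" using fund_dom[OF q(2)] by blast
  have "alpha M q1 = alpha M q2" using y1 y2 q(3) by simp
  then show "q1 = q2" using alpha_inj[of q1 M q2] q(1,2) by (auto simp: Dom_def Vset_def)
qed

end


lemma zeros_lt: "y 0 = 1 \<Longrightarrow> lex_less zeros y"
  unfolding lex_less_def by (intro exI[of _ 0]) auto

lemma dom_ab:
  assumes fwa: "fw M a" and fwb: "fw 1 b" and b0: "b ! 0 = 1" and q: "q \<in> Dom M (comp M a b)"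
  shows "q \<in> Dom M a \<and> Phihat M a q \<in> Dom 1 b \<and>
         Phihat M (comp M a b) q = Phihat 1 b (Phihat M a q) \<and>
         (\<exists>z. alpha M q = enc M (comp M a b) 0 z \<and> alpha 1 (Phihat M (comp M a b) q) = z)"
proof -
  have oka: "okw M a" by (rule okM[OF fwa])
  have okb: "okw 1 b" by (rule okM[OF fwb])
  have bne: "b \<noteq> []" using okb by (simp add: okw_def)
  have M: "1 \<le> M" by (rule Mpos[OF fwa])
  let ?ab = "comp M a b"
  have okab: "okw M ?ab" by (rule ab_ok[OF oka okb b0])
  have comp_eq: "\<And>z. z \<in> Omega 1 \<Longrightarrow> enc M ?ab 0 z = enc M a 0 (enc 1 b 0 z)"
    by (rule compose[OF oka okb b0])
  define Z where "Z = enc 1 b 0 zeros"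
  define Oo where "Oo = enc 1 b 0 ones"
  have ZO: "Z \<in> Omega 1" "Oo \<in> Omega 1" unfolding Z_def Oo_def by (rule enc_Omega[OF okb])+
  have Z0: "Z 0 = 1" unfolding Z_def using b0 bne by (simp add: enc_def pb_def Lw_def)
  have O0: "Oo 0 = 1" unfolding Oo_def by (rule enc1_first[OF okb b0 ones_Omega]) simp
  have shZ: "lex_le (shift k Z) Z" for k unfolding Z_def by (rule sig_zeros[OF fwb])
  have sh1: "lex_le (shift k ones) ones" for k by (simp add: shift_def)
  have shO: "lex_le (shift k Oo) Oo" for k unfolding Oo_def by (rule R4[OF fwb ones_Omega _ sh1]) simp
  have perab: "per ?ab = enc M a 0 Z" unfolding Z_def using per_enc[OF okab] comp_eq[OF zeros_Omega] by simp
  have preab: "pre_per (wplus ?ab) (wrefl M ?ab) = enc M a 0 Oo"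
    unfolding Oo_def using preper_enc[OF okab] comp_eq[OF ones_Omega] by simp
  have a01: "1 \<le> a ! 0" by (rule c0[OF fwa])
  have infZ: "infnz (enc M a 0 Z)"
    using infnz_zeros[OF okab ab0[OF oka okb b0 a01]] comp_eq[OF zeros_Omega] by (simp add: Z_def)
  have infO: "infnz (enc M a 0 Oo)"
    using infnz_ones[OF okab] comp_eq[OF ones_Omega] by (simp add: Oo_def)
  have LAB: "1 < qL M ?ab \<and> qL M ?ab \<le> real M + 1 \<and> alpha M (qL M ?ab) = enc M a 0 Z"
    unfolding qL_def perab by (rule the_q[OF M enc_Omega[OF oka] infZ R4[OF fwa ZO(1) Z0 shZ]])
  have RAB: "1 < qR M ?ab \<and> qR M ?ab \<le> real M + 1 \<and> alpha M (qR M ?ab) = enc M a 0 Oo"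
    unfolding qR_def preab by (rule the_q[OF M enc_Omega[OF oka] infO R4[OF fwa ZO(2) O0 shO]])
  note LA = qL_props[OF fwa] and RA = qR_props[OF fwa]
  note LB = qL_props[OF fwb] and RB = qR_props[OF fwb]
  have qq: "qL M ?ab < q" "q \<le> qR M ?ab" "1 < q" "q \<le> real M + 1" "alpha M q \<in> Vseq M"
    using q by (auto simp: Dom_def Vset_def)
  have "lex_less (enc M a 0 zeros) (enc M a 0 Z)" using enc_mono[OF oka zeros_Omega ZO(1) zeros_lt[of Z, OF Z0]] .
  then have "qL M a < qL M ?ab" using LA LAB alpha_less_imp[of "qL M a" M "qL M ?ab"] by auto
  moreover have "lex_le (enc M a 0 Oo) (enc M a 0 ones)"
    using enc_le_iff[OF oka ZO(2) ones_Omega] bin_le_ones[OF ZO(2)] by simp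
  then have "qR M ?ab \<le> qR M a" using RA RAB alpha_le_imp[of "qR M ?ab" M "qR M a"] by auto
  ultimately have qa: "q \<in> Dom M a" using q qq by (auto simp: Dom_def)
  obtain y where y: "y \<in> Omega 1" "y 0 = 1" "alpha M q = enc M a 0 y" "y \<in> Vseq 1"
      "1 < Phihat M a q" "Phihat M a q \<le> 2" "alpha 1 (Phihat M a q) = y"
    using fund_dom[OF fwa qa] by blast
  let ?p = "Phihat M a q"
  have "lex_less (alpha M (qL M ?ab)) (alpha M q)" using alpha_strict_mono[of "qL M ?ab" q M] LAB qq by auto
  then have "lex_less Z y" using LAB y(3) enc_less_iff[OF oka ZO(1) y(1)] by simp
  then have pL: "qL 1 b < ?p" using LB y alpha_less_imp[of "qL 1 b" 1 ?p] by (auto simp: Z_def)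
  have "lex_le (alpha M q) (alpha M (qR M ?ab))"
    using alpha_strict_mono[of q "qR M ?ab" M] RAB qq by (cases "q = qR M ?ab") (auto simp: lex_le_def)
  then have "lex_le y Oo" using RAB y(3) enc_le_iff[OF oka y(1) ZO(2)] by simp
  then have pR: "?p \<le> qR 1 b" using RB y alpha_le_imp[of ?p 1 "qR 1 b"] by (auto simp: Oo_def)
  have pb: "?p \<in> Dom 1 b" using pL pR y by (auto simp: Dom_def Vset_def)
  obtain z where z: "z \<in> Omega 1" "z 0 = 1" "alpha 1 ?p = enc 1 b 0 z"
      "1 < Phihat 1 b ?p" "Phihat 1 b ?p \<le> 2" "alpha 1 (Phihat 1 b ?p) = z"
    using fund_dom[OF fwb pb] by blast
  have aq: "alpha M q = enc M ?ab 0 z" using y(3,7) z(3) comp_eq[OF z(1)] by simp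
  have "Phihat M ?ab q = Phihat 1 b ?p" unfolding Phihat_def[of M ?ab]
  proof (rule the_equality)
    show "1 < Phihat 1 b ?p \<and> Phihat 1 b ?p \<le> 2 \<and> alpha 1 (Phihat 1 b ?p) = Phi M ?ab (alpha M q)"
      using z aq Phi_eq[OF okab z(1,2)] by simp
    fix p' assume "1 < p' \<and> p' \<le> 2 \<and> alpha 1 p' = Phi M ?ab (alpha M q)"
    then show "p' = Phihat 1 b ?p" using z aq Phi_eq[OF okab z(1,2)] alpha_inj[of p' 1 "Phihat 1 b ?p"] by simp
  qed
  then show ?thesis using qa pb aq z by auto
qed

theorem lemma2p10:
  fixes M :: nat and a b :: "nat list"
  assumes "M \<ge> 1" and "a \<in> Fund M" and "b \<in> Fund 1"
  shows "(\<forall>x \<in> X M (comp M a b). Phi M a x \<in> X 1 b \<and>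
            Phi M (comp M a b) x = Phi 1 b (Phi M a x))
       \<and> (\<forall>q \<in> Dom M (comp M a b). q \<in> Dom M a \<and> Phihat M a q \<in> Dom 1 b \<and>
            Phihat M (comp M a b) q = Phihat 1 b (Phihat M a q))
       \<and> (\<forall>y \<in> Xstar. inv_into (X M (comp M a b)) (Phi M (comp M a b)) y =
            inv_into (X M a) (Phi M a) (inv_into (X 1 b) (Phi 1 b) y))
       \<and> (\<forall>p \<in> Phihat M (comp M a b) ` Dom M (comp M a b).
            inv_into (Dom M (comp M a b)) (Phihat M (comp M a b)) p =
            inv_into (Dom M a) (Phihat M a) (inv_into (Dom 1 b) (Phihat 1 b) p))"
proof -
  have fwa: "fw M a" by (rule Fund_fw[OF assms(1,2)])
  have fwb: "fw 1 b" and b0: "b ! 0 = 1" using Fund1[OF assms(3)] by auto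
  have oka: "okw M a" by (rule okM[OF fwa])
  have okb: "okw 1 b" by (rule okM[OF fwb])
  let ?ab = "comp M a b"
  have okab: "okw M ?ab" by (rule ab_ok[OF oka okb b0])
  have comp_eq: "\<And>z. z \<in> Omega 1 \<Longrightarrow> enc M ?ab 0 z = enc M a 0 (enc 1 b 0 z)"
    by (rule compose[OF oka okb b0])
  have abne: "?ab \<noteq> []" using okab by (simp add: okw_def)
  have bne: "b \<noteq> []" using okb by (simp add: okw_def)
  have w1: "enc 1 b 0 z \<in> Omega 1 \<and> enc 1 b 0 z 0 = 1" if "z \<in> Omega 1" "z 0 = 1" for z
    using enc_Omega[OF okb] enc1_first[OF okb b0 that] by auto
  have P1: "Phi M a x \<in> X 1 b \<and> Phi M ?ab x = Phi 1 b (Phi M a x)" if x: "x \<in> X M ?ab" for x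
  proof -
    obtain z where z: "x = enc M ?ab 0 z" "z \<in> Omega 1" "z 0 = 1" using x X_eq[OF abne] by auto
    have w: "enc 1 b 0 z \<in> Omega 1" "enc 1 b 0 z 0 = 1" using w1[OF z(2,3)] by auto
    have "Phi M a x = enc 1 b 0 z" using z comp_eq Phi_eq[OF oka w] by simp
    moreover have "Phi M ?ab x = z" using z Phi_eq[OF okab z(2,3)] by simp
    ultimately show ?thesis using X_mem[OF bne z(2,3), of 1] Phi_eq[OF okb z(2,3)] by simp
  qed
  have P2: "\<forall>q \<in> Dom M ?ab. q \<in> Dom M a \<and> Phihat M a q \<in> Dom 1 b \<and>
            Phihat M ?ab q = Phihat 1 b (Phihat M a q)"
    using dom_ab[OF fwa fwb b0] by blast
  have P3: "inv_into (X M ?ab) (Phi M ?ab) y = inv_into (X M a) (Phi M a) (inv_into (X 1 b) (Phi 1 b) y)"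
    if y: "y \<in> Xstar" for y
  proof -
    have y1: "y \<in> Omega 1" "y 0 = 1" using y by (auto simp: Xstar_def)
    have w: "enc 1 b 0 y \<in> Omega 1" "enc 1 b 0 y 0 = 1" using w1[OF y1] by auto
    show ?thesis using inv_Phi[OF okab y1] inv_Phi[OF okb y1] inv_Phi[OF oka w] comp_eq[OF y1(1)] by simp
  qed
  have injab: "inj_on (Phihat M ?ab) (Dom M ?ab)"
  proof (rule inj_onI)
    fix q1 q2 assume q: "q1 \<in> Dom M ?ab" "q2 \<in> Dom M ?ab" "Phihat M ?ab q1 = Phihat M ?ab q2"
    obtain z1 where z1: "alpha M q1 = enc M ?ab 0 z1" "alpha 1 (Phihat M ?ab q1) = z1"
      using dom_ab[OF fwa fwb b0 q(1)] by blast
    obtain z2 where z2: "alpha M q2 = enc M ?ab 0 z2" "alpha 1 (Phihat M ?ab q2) = z2"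
      using dom_ab[OF fwa fwb b0 q(2)] by blast
    have "alpha M q1 = alpha M q2" using z1 z2 q(3) by simp
    then show "q1 = q2" using alpha_inj[of q1 M q2] q(1,2) by (auto simp: Dom_def Vset_def)
  qed
  have P4: "inv_into (Dom M ?ab) (Phihat M ?ab) p =
            inv_into (Dom M a) (Phihat M a) (inv_into (Dom 1 b) (Phihat 1 b) p)"
    if p: "p \<in> Phihat M ?ab ` Dom M ?ab" for p
  proof -
    obtain q where q: "q \<in> Dom M ?ab" "p = Phihat M ?ab q" using p by blast
    have d: "q \<in> Dom M a" "Phihat M a q \<in> Dom 1 b" "Phihat M ?ab q = Phihat 1 b (Phihat M a q)"
      using P2 q(1) by auto
    have "inv_into (Dom M ?ab) (Phihat M ?ab) p = q" using inv_into_f_f[OF injab q(1)] q(2) by simp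
    moreover have "inv_into (Dom 1 b) (Phihat 1 b) p = Phihat M a q"
      using inv_into_f_f[OF Phihat_inj[OF fwb] d(2)] q(2) d(3) by simp
    moreover have "inv_into (Dom M a) (Phihat M a) (Phihat M a q) = q"
      using inv_into_f_f[OF Phihat_inj[OF fwa] d(1)] .
    ultimately show ?thesis by simp
  qed
  show ?thesis using P1 P2 P3 P4 by blast
qed


end
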